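(* Let $d\in\mathbb N$, $B\in\mathbb N$, $\alpha>0$, $\Delta t>0$ and $\gamma\in(0,1)$ be fixed, and consider the sparse load-balancing queueing model described in the context. Let $(G_n,\mathbf z_n)_{n\in\mathbb N}$ be a sequence of (possibly random) finite graphs with maximal degree at most $d$ together with initial queue states, converging in probability in the local weak sense to a (possibly infinite, possibly random) rooted marked graph $(G,\mathbf z)$. Then for any policy $\pi$, $$\lim_{n\to\infty} J^{G_n,\mathbf z_n}(\pi) = J^{G,\mathbf z}(\pi).$$
   Context: Queueing model. A system is given by an undirected graph $G=(\mathcal N,\mathcal E)$ of maximal degree at most $d$ (every node has at least one neighbour); each node $i\in\mathcal N$ is an agent (scheduler) owning one FIFO queue with buffer capacity $B$, so the local state is $z_i\in\mathcal Z:=\{0,1,\dots,B\}$. Let $N_i=\{j:(i,j)\in\mathcal E\}$ denote the neighbours of $i$. Time is divided into decision epochs $t=0,1,2,\dots$ of length $\Delta t$. A shared per-agent arrival rate $\lambda(t)>0$ evolves as a finite-state Markov chain (Markov-modulated Poisson arrivals, e.g. switching between two positive rates $\lambda_h,\lambda_l$), common to all agents. A policy is a sequence $\pi=(\pi_t)_{t\ge0}$ of decision rules $\pi_t:\mathcal Z\to[0,1]$. At the start of epoch $t$, each agent $i$ independently samples an action $a_i(t)\in\{0,1\}$ with $\mathbb P(a_i(t)=1)=\pi_t(z_i(t))$; action $0$ means all jobs arriving at agent $i$ during the epoch are sent to its own queue, action $1$ means each such job is sent to a uniformly random neighbour's queue. Consequently, during epoch $t$ queue $i$ evolves (independently across queues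 given the actions and $\lambda(t)$) as a continuous-time birth–death chain on $\mathcal Z$ for time $\Delta t$, with arrival rate $\lambda^i_t=\lambda(t)\big(1-a_i(t)+\sum_{j\in N_i} a_j(t)/|N_j|\big)$ (transition $z\to z+1$ for $z<B$) and service rate $\alpha$ (transition $z\to z-1$ for $z>0$); an arrival finding the queue in state $B$ is dropped. Let $D_i(t)$ be the expected number of dropped jobs at queue $i$ during epoch $t$ given the states and actions at the start of the epoch. Objectives. For a finite graph $G_n$ with initial states $\mathbf z_n$, let $D^N(t)=\frac1{|G_n|}\sum_{i\in G_n}D_i(t)$ and $J^{G_n,\mathbf z_n}(\pi)=-\mathbb E\big[\sum_{t=0}^\infty\gamma^t D^N(t)\big]$. For the limiting rooted marked graph $(G,\varnothing,\mathbf z)$ run under the same dynamics, let $D(t)=D_\varnothing(t)$ be the expected drops at the root node and $J^{G,\mathbf z}(\pi)=-\mathbb E\big[\sum_{t=0}^\infty\gamma^tD(t)\big]$. Local weak convergence. $\mathcal G_*$ is the space of marked rooted graphs $(G,\varnothing,\mathbf z)$ (graph, root node, marks $\mathbf z\in\mathcal Z^{\mathcal N}$). Let $B_k(G,\varnothing,\mathbf z)$ be the marked rooted subgraph induced by the $k$-hop neighbourhood of the root. $(G_n,\varnothing_n,\mathbf z_n)\to(G,\varnothing,\mathbf z)$ in $\mathcal G_*$ if for every $k$ there is $n'$ such that for all $n>n'$ there is a mark-preserving rooted isomorphism $B_k(G_n,\varnothing_n,\mathbf z_n)\to B_k(G,\varnothing,\mathbf z)$. A sequence of finite marked graphs $(G_n,\mathbf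 z_n)$ converges in probability in the local weak sense to $(G,\mathbf z)$ if $\frac1{|G_n|}\sum_{i\in G_n}f(C_i(G_n))\to\mathbb E[f(G,\varnothing,\mathbf z)]$ in probability for every bounded continuous $f:\mathcal G_*\to\mathbb R$, where $C_i(G_n)$ is the connected component of $i$ in $G_n$ rooted at $i$ with marks $\mathbf z_n$. *)

theory Defs
  imports "HOL-Probability.Probability"
begin

text \<open>A graph is a vertex set of naturals with an adjacency relation; a marked graph
additionally carries queue states (marks); a rooted marked graph additionally a root.\<close>

type_synonym graph = "nat set \<times> (nat \<Rightarrow> nat \<Rightarrow> bool)"
type_synonym mgraph = "graph \<times> (nat \<Rightarrow> nat)"
type_synonym rgraph = "mgraph \<times> nat"

definition verts :: "graph \<Rightarrow> nat set" where "verts G = fst G"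
definition adj :: "graph \<Rightarrow> nat \<Rightarrow> nat \<Rightarrow> bool" where "adj G = snd G"
definition nbrs :: "graph \<Rightarrow> nat \<Rightarrow> nat set" where
  "nbrs G i = {j \<in> verts G. adj G i j}"

definition wf_graph :: "graph \<Rightarrow> bool" where
  "wf_graph G \<longleftrightarrow> (\<forall>i j. adj G i j \<longrightarrow> i \<in> verts G \<and> j \<in> verts G \<and> adj G j i \<and> i \<noteq> j)"

definition max_deg_le :: "nat \<Rightarrow> graph \<Rightarrow> bool" where
  "max_deg_le d G \<longleftrightarrow> (\<forall>i\<in>verts G. finite (nbrs G i) \<and> card (nbrs G i) \<le> d)"

definition no_isolated :: "graph \<Rightarrow> bool" where
  "no_isolated G \<longleftrightarrow> (\<forall>i\<in>verts G. nbrs G i \<noteq> {})"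

definition marks_ok :: "nat \<Rightarrow> mgraph \<Rightarrow> bool" where
  "marks_ok B g \<longleftrightarrow> (\<forall>i\<in>verts (fst g). snd g i \<le> B)"

fun ballset :: "graph \<Rightarrow> nat \<Rightarrow> nat \<Rightarrow> nat set" where
  "ballset G 0 r = {r}"
| "ballset G (Suc k) r = ballset G k r \<union> {l. \<exists>j\<in>ballset G k r. adj G j l}"

definition induced :: "graph \<Rightarrow> nat set \<Rightarrow> graph" where
  "induced G S = (verts G \<inter> S, \<lambda>i j. adj G i j \<and> i \<in> S \<and> j \<in> S)"

definition ball :: "nat \<Rightarrow> rgraph \<Rightarrow> rgraph" where
  "ball k g = ((induced (fst (fst g)) (ballset (fst (fst g)) k (snd g)), snd (fst g)), snd g)"

definition comp_set :: "graph \<Rightarrow> nat \<Rightarrow> nat set" where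
  "comp_set G r = (\<Union>k. ballset G k r)"

definition component :: "mgraph \<Rightarrow> nat \<Rightarrow> rgraph" where
  "component g i = ((induced (fst g) (comp_set (fst g) i), snd g), i)"

definition rg_iso :: "rgraph \<Rightarrow> rgraph \<Rightarrow> bool" where
  "rg_iso g h \<longleftrightarrow> (\<exists>\<phi>. bij_betw \<phi> (verts (fst (fst g))) (verts (fst (fst h))) \<and>
      \<phi> (snd g) = snd h \<and>
      (\<forall>i\<in>verts (fst (fst g)). \<forall>j\<in>verts (fst (fst g)).
          adj (fst (fst g)) i j \<longleftrightarrow> adj (fst (fst h)) (\<phi> i) (\<phi> j)) \<and>
      (\<forall>i\<in>verts (fst (fst g)). snd (fst g) i = snd (fst h) (\<phi> i)))"

definition in_Gstar :: "nat \<Rightarrow> rgraph \<Rightarrow> bool" where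
  "in_Gstar B g \<longleftrightarrow> wf_graph (fst (fst g)) \<and> snd g \<in> verts (fst (fst g)) \<and>
     (\<forall>i\<in>verts (fst (fst g)). finite (nbrs (fst (fst g)) i)) \<and>
     verts (fst (fst g)) = comp_set (fst (fst g)) (snd g) \<and> marks_ok B (fst g)"

definition Gstar :: "nat \<Rightarrow> rgraph set" where
  "Gstar B = {g. in_Gstar B g}"

definition lw_converges :: "(nat \<Rightarrow> rgraph) \<Rightarrow> rgraph \<Rightarrow> bool" where
  "lw_converges seq g \<longleftrightarrow> (\<forall>k. \<exists>n'. \<forall>n>n'. rg_iso (ball k (seq n)) (ball k g))"

text \<open>Bounded continuous functions on G_* (G_* is metrizable, so sequential continuity
is continuity; continuity forces invariance under rooted isomorphism).\<close>
definition lw_bcont :: "nat \<Rightarrow> (rgraph \<Rightarrow> real) \<Rightarrow> bool" where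
  "lw_bcont B f \<longleftrightarrow> (\<exists>C. \<forall>g. in_Gstar B g \<longrightarrow> \<bar>f g\<bar> \<le> C) \<and>
     (\<forall>seq g. (\<forall>n. in_Gstar B (seq n)) \<longrightarrow> in_Gstar B g \<longrightarrow> lw_converges seq g \<longrightarrow>
         (\<lambda>n. f (seq n)) \<longlonglongrightarrow> f g)"

text \<open>Borel sigma-algebra of G_*: generated by the cylinder events on balls.\<close>
definition lw_sets :: "nat \<Rightarrow> rgraph set set" where
  "lw_sets B = sigma_sets (Gstar B) {{g \<in> Gstar B. rg_iso (ball k g) H} | k H. True}"

definition lw_avg :: "(rgraph \<Rightarrow> real) \<Rightarrow> mgraph \<Rightarrow> real" where
  "lw_avg f g = (\<Sum>i\<in>verts (fst g). f (component g i)) / real (card (verts (fst g)))"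

definition lw_conv_prob :: "nat \<Rightarrow> (nat \<Rightarrow> mgraph pmf) \<Rightarrow> rgraph measure \<Rightarrow> bool" where
  "lw_conv_prob B Gn Glim \<longleftrightarrow> (\<forall>f. lw_bcont B f \<longrightarrow> (\<forall>\<epsilon>>0.
     (\<lambda>n. measure_pmf.prob (Gn n) {g. \<epsilon> < \<bar>lw_avg f g - integral\<^sup>L Glim f\<bar>}) \<longlonglongrightarrow> 0))"

definition qgen :: "nat \<Rightarrow> real \<Rightarrow> real \<Rightarrow> nat \<Rightarrow> nat \<Rightarrow> real" where
  "qgen B r al x y =
     (if x < B \<and> y = Suc x then r
      else if 0 < x \<and> Suc y = x then al
      else if y = x then - ((if x < B then r else 0) + (if 0 < x then al else 0))
      else 0)"

fun qpow :: "nat \<Rightarrow> real \<Rightarrow> real \<Rightarrow> nat \<Rightarrow> nat \<Rightarrow> nat \<Rightarrow> real" where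
  "qpow B r al 0 x y = (if x = y then 1 else 0)"
| "qpow B r al (Suc k) x y = (\<Sum>w\<le>B. qpow B r al k x w * qgen B r al w y)"

definition bd_trans :: "nat \<Rightarrow> real \<Rightarrow> real \<Rightarrow> real \<Rightarrow> nat \<Rightarrow> nat \<Rightarrow> real" where
  "bd_trans B r al s x y = (\<Sum>k. s ^ k / fact k * qpow B r al k x y)"

definition bd_pmf :: "nat \<Rightarrow> real \<Rightarrow> real \<Rightarrow> real \<Rightarrow> nat \<Rightarrow> nat pmf" where
  "bd_pmf B r al dt x = embed_pmf (\<lambda>y. if y \<le> B then bd_trans B r al dt x y else 0)"

text \<open>Expected number of dropped jobs during an epoch of length dt, starting in x:
arrival rate times expected time spent in the full state B.\<close>
definition drops :: "nat \<Rightarrow> real \<Rightarrow> real \<Rightarrow> real \<Rightarrow> nat \<Rightarrow> real" where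
  "drops B r al dt x = r * integral {0..dt} (\<lambda>s. bd_trans B r al s x B)"

definition arr_rate :: "real \<Rightarrow> graph \<Rightarrow> (nat \<Rightarrow> bool) \<Rightarrow> nat \<Rightarrow> real" where
  "arr_rate l G a i = l * ((1 - of_bool (a i)) +
      (\<Sum>j\<in>nbrs G i. of_bool (a j) / real (card (nbrs G j))))"

definition actions :: "(nat \<Rightarrow> nat \<Rightarrow> real) \<Rightarrow> graph \<Rightarrow> nat \<Rightarrow> (nat \<Rightarrow> nat) \<Rightarrow> (nat \<Rightarrow> bool) measure" where
  "actions pol G t z = PiM (verts G) (\<lambda>i. measure_pmf (bernoulli_pmf (pol t (z i))))"

definition stM :: "graph \<Rightarrow> ('s \<times> (nat \<Rightarrow> nat)) measure" where
  "stM G = count_space UNIV \<Otimes>\<^sub>M PiM (verts G) (\<lambda>_. count_space UNIV)"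

definition epoch_step ::
  "nat \<Rightarrow> real \<Rightarrow> real \<Rightarrow> ('s \<Rightarrow> real) \<Rightarrow> ('s \<Rightarrow> 's pmf) \<Rightarrow> (nat \<Rightarrow> nat \<Rightarrow> real) \<Rightarrow>
   graph \<Rightarrow> nat \<Rightarrow> 's \<times> (nat \<Rightarrow> nat) \<Rightarrow> ('s \<times> (nat \<Rightarrow> nat)) measure" where
  "epoch_step B al dt lam P pol G t sz =
     bind (actions pol G t (snd sz)) (\<lambda>a.
     bind (PiM (verts G) (\<lambda>i. measure_pmf (bd_pmf B (arr_rate (lam (fst sz)) G a i) al dt (snd sz i))))
       (\<lambda>z'. distr (measure_pmf (P (fst sz))) (stM G) (\<lambda>s'. (s', z'))))"

text \<open>Joint law of (arrival-rate state, queue states) at the start of epoch t.\<close>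
primrec state_dist ::
  "nat \<Rightarrow> real \<Rightarrow> real \<Rightarrow> ('s \<Rightarrow> real) \<Rightarrow> ('s \<Rightarrow> 's pmf) \<Rightarrow> 's pmf \<Rightarrow> (nat \<Rightarrow> nat \<Rightarrow> real) \<Rightarrow>
   mgraph \<Rightarrow> nat \<Rightarrow> ('s \<times> (nat \<Rightarrow> nat)) measure" where
  "state_dist B al dt lam P l0 pol g 0 =
     distr (measure_pmf l0) (stM (fst g)) (\<lambda>s. (s, restrict (snd g) (verts (fst g))))"
| "state_dist B al dt lam P l0 pol g (Suc t) =
     bind (state_dist B al dt lam P l0 pol g t) (epoch_step B al dt lam P pol (fst g) t)"

definition exp_drops ::
  "nat \<Rightarrow> real \<Rightarrow> real \<Rightarrow> ('s \<Rightarrow> real) \<Rightarrow> ('s \<Rightarrow> 's pmf) \<Rightarrow> 's pmf \<Rightarrow> (nat \<Rightarrow> nat \<Rightarrow> real) \<Rightarrow>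
   mgraph \<Rightarrow> nat \<Rightarrow> nat \<Rightarrow> real" where
  "exp_drops B al dt lam P l0 pol g i t =
     (\<integral>sz. (\<integral>a. drops B (arr_rate (lam (fst sz)) (fst g) a i) al dt (snd sz i)
               \<partial>actions pol (fst g) t (snd sz))
        \<partial>state_dist B al dt lam P l0 pol g t)"

definition J_fin ::
  "nat \<Rightarrow> real \<Rightarrow> real \<Rightarrow> real \<Rightarrow> ('s \<Rightarrow> real) \<Rightarrow> ('s \<Rightarrow> 's pmf) \<Rightarrow> 's pmf \<Rightarrow>
   (nat \<Rightarrow> nat \<Rightarrow> real) \<Rightarrow> mgraph pmf \<Rightarrow> real" where
  "J_fin B al dt \<gamma> lam P l0 pol Gn = - (\<integral>g. (\<Sum>t. \<gamma> ^ t *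
      ((\<Sum>i\<in>verts (fst g). exp_drops B al dt lam P l0 pol g i t) / real (card (verts (fst g)))))
      \<partial>measure_pmf Gn)"

definition J_lim ::
  "nat \<Rightarrow> real \<Rightarrow> real \<Rightarrow> real \<Rightarrow> ('s \<Rightarrow> real) \<Rightarrow> ('s \<Rightarrow> 's pmf) \<Rightarrow> 's pmf \<Rightarrow>
   (nat \<Rightarrow> nat \<Rightarrow> real) \<Rightarrow> rgraph measure \<Rightarrow> real" where
  "J_lim B al dt \<gamma> lam P l0 pol Glim = - (\<integral>g. (\<Sum>t. \<gamma> ^ t *
      exp_drops B al dt lam P l0 pol (fst g) (snd g) t) \<partial>Glim)"

end

theory Submission
  imports Defs
begin

lemma meas_countable_range:
  assumes "countable A" "f \<in> space M \<rightarrow> A" "\<And>a. a \<in> A \<Longrightarrow> f -` {a} \<inter> space M \<in> sets M"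
  shows "f \<in> M \<rightarrow>\<^sub>M count_space UNIV"
proof -
  have "f \<in> M \<rightarrow>\<^sub>M count_space A"
    using assms by (subst measurable_count_space_eq_countable) auto
  moreover have "g \<in> count_space A \<rightarrow>\<^sub>M count_space UNIV" for g :: "_ \<Rightarrow> _"
    by simp
  ultimately show ?thesis
    using measurable_comp[of f M "count_space A" id "count_space UNIV"] by (simp add: o_def)
qed

lemma PiM_kernel_meas:
  fixes K :: "'x \<Rightarrow> 'i \<Rightarrow> 'b pmf"
  assumes K: "\<And>i. i \<in> I \<Longrightarrow> (\<lambda>x. measure_pmf (K x i)) \<in> M \<rightarrow>\<^sub>M subprob_algebra (count_space UNIV)"
  shows "(\<lambda>x. PiM I (\<lambda>i. measure_pmf (K x i))) \<in> M \<rightarrow>\<^sub>M subprob_algebra (PiM I (\<lambda>_. count_space UNIV))"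
proof (rule measurable_subprob_algebra_generated[OF sets_PiM Int_stable_prod_algebra prod_algebra_sets_into_space])
  fix a assume "a \<in> space M"
  show "subprob_space (PiM I (\<lambda>i. measure_pmf (K a i)))"
    by (intro prob_space_imp_subprob_space prob_space_PiM) (simp add: prob_space_measure_pmf)
  show "sets (PiM I (\<lambda>i. measure_pmf (K a i))) = sets (PiM I (\<lambda>_. count_space UNIV))"
    by (intro sets_PiM_cong) auto
next
  fix A assume "A \<in> prod_algebra I (\<lambda>_. count_space UNIV :: 'b measure)"
  then obtain J E where A: "A = prod_emb I (\<lambda>_. count_space UNIV) J (\<Pi>\<^sub>E j\<in>J. E j)"
    "finite J" "J \<noteq> {} \<or> I = {}" "J \<subseteq> I" by (rule prod_algebraE) 
  have eq: "emeasure (PiM I (\<lambda>i. measure_pmf (K x i))) A = (\<Prod>j\<in>J. emeasure (measure_pmf (K x j)) (E j))" for x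
  proof -
    interpret product_prob_space "\<lambda>i. measure_pmf (K x i)" I
      by unfold_locales
    have "A = prod_emb I (\<lambda>i. measure_pmf (K x i)) J (\<Pi>\<^sub>E j\<in>J. E j)"
      unfolding A(1) prod_emb_def by simp
    then show ?thesis using A by (simp add: emeasure_PiM_emb)
  qed
  show "(\<lambda>a. emeasure (PiM I (\<lambda>i. measure_pmf (K a i))) A) \<in> borel_measurable M"
    unfolding eq
  proof (intro borel_measurable_prod_ennreal)
    fix j assume "j \<in> J"
    then have "j \<in> I" using A by auto
    show "(\<lambda>x. emeasure (measure_pmf (K x j)) (E j)) \<in> borel_measurable M"
      using measurable_emeasure_subprob_algebra[of "E j" "count_space UNIV"] K[OF \<open>j \<in> I\<close>]
      by (intro measurable_compose[OF K[OF \<open>j \<in> I\<close>]] measurable_emeasure_subprob_algebra) auto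
  qed
next
  have "emeasure (PiM I (\<lambda>i. measure_pmf (K x i))) (\<Pi>\<^sub>E i\<in>I. space (count_space UNIV)) = 1" for x
  proof -
    interpret prob_space "PiM I (\<lambda>i. measure_pmf (K x i))"
      by (intro prob_space_PiM) (simp add: prob_space_measure_pmf)
    show ?thesis using emeasure_space_1 by (simp add: space_PiM)
  qed
  then show "(\<lambda>a. emeasure (PiM I (\<lambda>i. measure_pmf (K a i))) (\<Pi>\<^sub>E i\<in>I. space (count_space UNIV))) \<in> borel_measurable M"
    by simp
qed


lemma count_space_id_meas: "(\<lambda>x. x) \<in> count_space A \<rightarrow>\<^sub>M count_space UNIV"
  by simp

lemma restrict_count_meas:
  fixes S :: "'i set"
  assumes "finite S" "S \<subseteq> I"
  shows "(\<lambda>x. restrict x S) \<in> PiM I (\<lambda>_. count_space (UNIV::'b::countable set)) \<rightarrow>\<^sub>M count_space (PiE S (\<lambda>_. UNIV))"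
proof -
  have "(\<lambda>x. restrict x S) \<in> PiM I (\<lambda>_. count_space (UNIV::'b set)) \<rightarrow>\<^sub>M PiM S (\<lambda>_. count_space UNIV)"
    using assms by (intro measurable_restrict_subset) 
  moreover have "PiM S (\<lambda>_. count_space (UNIV::'b set)) = count_space (PiE S (\<lambda>_. UNIV))"
    using assms by (intro count_space_PiM_finite) auto
  ultimately show ?thesis by simp
qed

lemma restrict_count_meas_UNIV:
  fixes S :: "'i set"
  assumes "finite S" "S \<subseteq> I"
  shows "(\<lambda>x. restrict x S) \<in> PiM I (\<lambda>_. count_space (UNIV::'b::countable set)) \<rightarrow>\<^sub>M count_space UNIV"
  using measurable_comp[OF restrict_count_meas[OF assms] count_space_id_meas] by (simp add: o_def)


lemma proj_meas:
  assumes "finite S" "S \<subseteq> verts G"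
  shows "(\<lambda>x. (fst x, restrict (snd x) S)) \<in> (stM G :: ('s::countable \<times> (nat \<Rightarrow> nat)) measure) \<rightarrow>\<^sub>M count_space UNIV"
proof -
  have "(\<lambda>x. (fst x, restrict (snd x) S)) \<in> (stM G :: ('s \<times> (nat \<Rightarrow> nat)) measure) \<rightarrow>\<^sub>M
      count_space (UNIV::'s set) \<Otimes>\<^sub>M count_space (PiE S (\<lambda>_. UNIV :: nat set))"
    unfolding stM_def
    by (intro measurable_Pair measurable_fst'' measurable_compose[OF measurable_snd restrict_count_meas] assms) simp
  also have "count_space (UNIV::'s set) \<Otimes>\<^sub>M count_space (PiE S (\<lambda>_. UNIV :: nat set)) =
     count_space (UNIV \<times> PiE S (\<lambda>_. UNIV))"
    by (intro pair_measure_countable countable_PiE assms) auto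
  finally have "(\<lambda>x. (fst x, restrict (snd x) S)) \<in> (stM G :: ('s \<times> (nat \<Rightarrow> nat)) measure) \<rightarrow>\<^sub>M count_space (UNIV \<times> PiE S (\<lambda>_. UNIV))" .
  from measurable_comp[OF this count_space_id_meas] show ?thesis by (simp add: o_def)
qed

lemma comp_meas:
  assumes "i \<in> verts G"
  shows "(\<lambda>x. snd x i) \<in> (stM G :: ('s \<times> (nat \<Rightarrow> nat)) measure) \<rightarrow>\<^sub>M count_space UNIV"
  unfolding stM_def using assms by (intro measurable_compose[OF measurable_snd measurable_component_singleton]) auto

lemma actions_meas:
  "(\<lambda>x. actions pol G t (snd x)) \<in> (stM G :: ('s \<times> (nat \<Rightarrow> nat)) measure) \<rightarrow>\<^sub>M
     subprob_algebra (PiM (verts G) (\<lambda>_. count_space UNIV))"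
  unfolding actions_def
  by (intro PiM_kernel_meas measurable_compose[OF comp_meas measurable_measure_pmf])


lemma arr_rate_restrict:
  "i \<in> S \<Longrightarrow> nbrs G i \<subseteq> S \<Longrightarrow> arr_rate l G (restrict a S) i = arr_rate l G a i"
  unfolding arr_rate_def by (auto intro!: sum.cong arg_cong2[where f="(*)"] arg_cong2[where f="(+)"] simp: subset_eq)

lemma bd_kernel_meas:
  fixes lam :: "'s::finite \<Rightarrow> real"
  assumes i: "i \<in> verts G" and fin: "finite (nbrs G i)"
  shows "(\<lambda>y. measure_pmf (bd_pmf B (arr_rate (lam (fst (fst y))) G (snd y) i) al dt (snd (fst y) i)))
     \<in> ((stM G :: ('s \<times> (nat \<Rightarrow> nat)) measure) \<Otimes>\<^sub>M PiM (verts G) (\<lambda>_. count_space (UNIV::bool set)))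
        \<rightarrow>\<^sub>M subprob_algebra (count_space UNIV)"
proof -
  define S where "S = insert i (nbrs G i)"
  have S: "finite S" "S \<subseteq> verts G" using i fin by (auto simp: S_def nbrs_def)
  define h where "h = (\<lambda>(s::'s, n::nat, a'::nat \<Rightarrow> bool). measure_pmf (bd_pmf B (arr_rate (lam s) G a' i) al dt n))"
  have tr: "(\<lambda>y. (fst (fst y), snd (fst y) i, restrict (snd y) S)) \<in>
      ((stM G :: ('s \<times> (nat \<Rightarrow> nat)) measure) \<Otimes>\<^sub>M PiM (verts G) (\<lambda>_. count_space (UNIV::bool set)))
      \<rightarrow>\<^sub>M count_space (UNIV::'s set) \<Otimes>\<^sub>M (count_space (UNIV::nat set) \<Otimes>\<^sub>M count_space (PiE S (\<lambda>_. UNIV :: bool set)))"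
    unfolding stM_def
    by (intro measurable_Pair measurable_compose[OF measurable_fst measurable_fst]
          measurable_compose[OF measurable_fst comp_meas[unfolded stM_def]]
          measurable_compose[OF measurable_snd restrict_count_meas] S i)
  have "count_space (UNIV::'s set) \<Otimes>\<^sub>M (count_space (UNIV::nat set) \<Otimes>\<^sub>M count_space (PiE S (\<lambda>_. UNIV :: bool set)))
     = count_space (UNIV \<times> (UNIV \<times> PiE S (\<lambda>_. UNIV)))"
    using S by (simp add: pair_measure_countable countable_PiE)
  with tr have tr': "(\<lambda>y. (fst (fst y), snd (fst y) i, restrict (snd y) S)) \<in>
      ((stM G :: ('s \<times> (nat \<Rightarrow> nat)) measure) \<Otimes>\<^sub>M PiM (verts G) (\<lambda>_. count_space (UNIV::bool set)))
      \<rightarrow>\<^sub>M count_space (UNIV \<times> (UNIV \<times> PiE S (\<lambda>_. UNIV)))" by simp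
  have hm: "h \<in> count_space (UNIV \<times> (UNIV \<times> PiE S (\<lambda>_. UNIV))) \<rightarrow>\<^sub>M subprob_algebra (count_space UNIV)"
    by (auto simp: h_def measure_pmf_in_subprob_algebra)
  have "(\<lambda>y. h (fst (fst y), snd (fst y) i, restrict (snd y) S)) \<in> 
      ((stM G :: ('s \<times> (nat \<Rightarrow> nat)) measure) \<Otimes>\<^sub>M PiM (verts G) (\<lambda>_. count_space (UNIV::bool set)))
        \<rightarrow>\<^sub>M subprob_algebra (count_space UNIV)"
    using measurable_comp[OF tr' hm] by (simp add: o_def)
  moreover have "h (fst (fst y), snd (fst y) i, restrict (snd y) S) =
     measure_pmf (bd_pmf B (arr_rate (lam (fst (fst y))) G (snd y) i) al dt (snd (fst y) i))" for y
    unfolding h_def using arr_rate_restrict[of i S G "lam (fst (fst y))" "snd y"] by (simp add: S_def subset_insertI)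
  ultimately show ?thesis by simp
qed

lemma pz_meas:
  "(\<lambda>z'. distr (measure_pmf (P s)) (stM G) (\<lambda>s'. (s', z'))) \<in>
     PiM (verts G) (\<lambda>_. count_space (UNIV::nat set)) \<rightarrow>\<^sub>M subprob_algebra (stM G :: ('s \<times> (nat \<Rightarrow> nat)) measure)"
proof (rule measurable_distr2[where M="count_space UNIV"])
  show "(\<lambda>(z', s'). (s', z')) \<in> PiM (verts G) (\<lambda>_. count_space (UNIV::nat set)) \<Otimes>\<^sub>M count_space UNIV \<rightarrow>\<^sub>M (stM G :: ('s \<times> (nat \<Rightarrow> nat)) measure)"
    unfolding stM_def by (simp add: case_prod_unfold)
  show "(\<lambda>z'. measure_pmf (P s)) \<in> PiM (verts G) (\<lambda>_. count_space (UNIV::nat set)) \<rightarrow>\<^sub>M subprob_algebra (count_space UNIV)"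
    by (simp add: measure_pmf_in_subprob_algebra)
qed

lemma inner_meas:
  fixes lam :: "'s::finite \<Rightarrow> real"
  assumes lf: "\<And>i. i \<in> verts G \<Longrightarrow> finite (nbrs G i)"
  shows "(\<lambda>y. bind (PiM (verts G) (\<lambda>i. measure_pmf (bd_pmf B (arr_rate (lam (fst (fst y))) G (snd y) i) al dt (snd (fst y) i))))
        (\<lambda>z'. distr (measure_pmf (P (fst (fst y)))) (stM G) (\<lambda>s'. (s', z'))))
     \<in> ((stM G :: ('s \<times> (nat \<Rightarrow> nat)) measure) \<Otimes>\<^sub>M PiM (verts G) (\<lambda>_. count_space (UNIV::bool set))) \<rightarrow>\<^sub>M subprob_algebra (stM G)"
proof -
  let ?N = "PiM (verts G) (\<lambda>_. count_space (UNIV::bool set))"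
  let ?Z = "PiM (verts G) (\<lambda>_. count_space (UNIV::nat set))"
  have k1: "(\<lambda>y. PiM (verts G) (\<lambda>i. measure_pmf (bd_pmf B (arr_rate (lam (fst (fst y))) G (snd y) i) al dt (snd (fst y) i))))
     \<in> ((stM G :: ('s \<times> (nat \<Rightarrow> nat)) measure) \<Otimes>\<^sub>M ?N) \<rightarrow>\<^sub>M subprob_algebra ?Z"
    by (intro PiM_kernel_meas bd_kernel_meas lf)
  have k2: "(\<lambda>y. distr (measure_pmf (P (fst (fst (fst y))))) (stM G) (\<lambda>s'. (s', snd y)))
     \<in> (((stM G :: ('s \<times> (nat \<Rightarrow> nat)) measure) \<Otimes>\<^sub>M ?N) \<Otimes>\<^sub>M ?Z) \<rightarrow>\<^sub>M subprob_algebra (stM G)"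
  proof (rule measurable_distr2[where M="count_space UNIV"])
    show "(\<lambda>(y, s'). (s', snd y)) \<in> (((stM G :: ('s \<times> (nat \<Rightarrow> nat)) measure) \<Otimes>\<^sub>M ?N) \<Otimes>\<^sub>M ?Z) \<Otimes>\<^sub>M count_space UNIV \<rightarrow>\<^sub>M stM G"
      unfolding stM_def by (simp add: case_prod_unfold) 
    have "(\<lambda>y. fst (fst (fst y))) \<in> (((stM G :: ('s \<times> (nat \<Rightarrow> nat)) measure) \<Otimes>\<^sub>M ?N) \<Otimes>\<^sub>M ?Z) \<rightarrow>\<^sub>M count_space UNIV"
      unfolding stM_def by simp
    then show "(\<lambda>y. measure_pmf (P (fst (fst (fst y))))) \<in> (((stM G :: ('s \<times> (nat \<Rightarrow> nat)) measure) \<Otimes>\<^sub>M ?N) \<Otimes>\<^sub>M ?Z) \<rightarrow>\<^sub>M subprob_algebra (count_space UNIV)"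
      by (rule measurable_compose) (simp add: measure_pmf_in_subprob_algebra)
  qed
  show ?thesis
    by (rule measurable_bind[OF k1]) (use k2 in simp)
qed

lemma epoch_meas:
  fixes lam :: "'s::finite \<Rightarrow> real"
  assumes lf: "\<And>i. i \<in> verts G \<Longrightarrow> finite (nbrs G i)"
  shows "epoch_step B al dt lam P pol G t \<in> (stM G :: ('s \<times> (nat \<Rightarrow> nat)) measure) \<rightarrow>\<^sub>M subprob_algebra (stM G)"
  unfolding epoch_step_def[abs_def]
  by (rule measurable_bind[OF actions_meas]) (use inner_meas[OF lf] in simp)


lemma PiM_restrict_pmf:
  fixes p :: "'i \<Rightarrow> 'b::countable pmf"
  assumes S: "finite S" "S \<subseteq> I"
  shows "distr (PiM I (\<lambda>i. measure_pmf (p i))) (count_space UNIV) (\<lambda>x. restrict x S) = measure_pmf (Pi_pmf S undefined p)"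
proof -
  interpret product_prob_space "\<lambda>i. measure_pmf (p i)" I by unfold_locales
  have rm: "(\<lambda>x. restrict x S) \<in> PiM I (\<lambda>i. measure_pmf (p i)) \<rightarrow>\<^sub>M count_space UNIV"
  proof -
    have eq: "sets (PiM I (\<lambda>_. count_space (UNIV::'b set))) = sets (PiM I (\<lambda>i. measure_pmf (p i)))"
      by (intro sets_PiM_cong) auto
    show ?thesis using restrict_count_meas_UNIV[OF S, where 'b='b] unfolding measurable_cong_sets[OF eq refl] .
  qed
  show ?thesis
  proof (rule measure_eqI_countable_AE[where \<Omega>="PiE S (\<lambda>_. UNIV)"])
    show "AE x in distr (PiM I (\<lambda>i. measure_pmf (p i))) (count_space UNIV) (\<lambda>x. restrict x S). x \<in> PiE S (\<lambda>_. UNIV)"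
      using rm by (subst AE_distr_iff) auto
    show "AE x in measure_pmf (Pi_pmf S undefined p). x \<in> PiE S (\<lambda>_. UNIV)"
      using set_Pi_pmf_subset[OF S(1), of undefined p] by (intro AE_pmfI) (auto simp: PiE_def extensional_def)
    show "countable (PiE S (\<lambda>_. UNIV :: 'b set))" using S by (intro countable_PiE) auto
    fix f assume f: "f \<in> PiE S (\<lambda>_. UNIV :: 'b set)"
    have "(\<lambda>x. restrict x S) -` {f} \<inter> space (PiM I (\<lambda>i. measure_pmf (p i))) =
        prod_emb I (\<lambda>i. measure_pmf (p i)) S (PiE S (\<lambda>i. {f i}))"
      using f by (auto simp: prod_emb_def space_PiM PiE_def extensional_def fun_eq_iff restrict_def Pi_def)
    then have "emeasure (distr (PiM I (\<lambda>i. measure_pmf (p i))) (count_space UNIV) (\<lambda>x. restrict x S)) {f}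
       = (\<Prod>i\<in>S. emeasure (measure_pmf (p i)) {f i})"
      using rm S by (subst emeasure_distr) (auto simp: emeasure_PiM_emb)
    also have "\<dots> = ennreal (\<Prod>i\<in>S. pmf (p i) (f i))"
      by (simp add: emeasure_pmf_single prod_ennreal)
    also have "\<dots> = emeasure (measure_pmf (Pi_pmf S undefined p)) {f}"
      using f S by (simp add: emeasure_pmf_single pmf_Pi PiE_def extensional_def)
    finally show "emeasure (distr (PiM I (\<lambda>i. measure_pmf (p i))) (count_space UNIV) (\<lambda>x. restrict x S)) {f} =
       emeasure (measure_pmf (Pi_pmf S undefined p)) {f}" .
  qed auto
qed


definition nb :: "graph \<Rightarrow> nat set \<Rightarrow> nat set" where
  "nb G S = S \<union> (\<Union>i\<in>S. nbrs G i)"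

definition proj :: "nat set \<Rightarrow> 's \<times> (nat \<Rightarrow> nat) \<Rightarrow> 's \<times> (nat \<Rightarrow> nat)" where
  "proj S x = (fst x, restrict (snd x) S)"

lemma nb_sub: "S \<subseteq> verts G \<Longrightarrow> nb G S \<subseteq> verts G"
  by (auto simp: nb_def nbrs_def)

lemma nb_fin: "finite S \<Longrightarrow> (\<And>i. i \<in> S \<Longrightarrow> finite (nbrs G i)) \<Longrightarrow> finite (nb G S)"
  by (auto simp: nb_def)

lemma nb_mono: "S \<subseteq> nb G S" by (auto simp: nb_def)

context
  fixes B :: nat and al dt :: real and lam :: "'s::finite \<Rightarrow> real" and P :: "'s \<Rightarrow> 's pmf"
    and l0 :: "'s pmf" and pol :: "nat \<Rightarrow> nat \<Rightarrow> real"
begin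

definition step_pmf :: "graph \<Rightarrow> nat \<Rightarrow> nat set \<Rightarrow> 's \<times> (nat \<Rightarrow> nat) \<Rightarrow> ('s \<times> (nat \<Rightarrow> nat)) pmf" where
  "step_pmf G t S x =
     bind_pmf (Pi_pmf (nb G S) undefined (\<lambda>j. bernoulli_pmf (pol t (snd x j)))) (\<lambda>a.
     bind_pmf (Pi_pmf S undefined (\<lambda>i. bd_pmf B (arr_rate (lam (fst x)) G a i) al dt (snd x i))) (\<lambda>z'.
     map_pmf (\<lambda>s'. (s', z')) (P (fst x))))"

primrec Mt :: "mgraph \<Rightarrow> nat \<Rightarrow> nat set \<Rightarrow> ('s \<times> (nat \<Rightarrow> nat)) pmf" where
  "Mt g 0 S = map_pmf (\<lambda>s. (s, restrict (snd g) S)) l0"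
| "Mt g (Suc t) S = bind_pmf (Mt g t (nb (fst g) S)) (step_pmf (fst g) t S)"

lemma proj_meas':
  "finite S \<Longrightarrow> S \<subseteq> verts G \<Longrightarrow> proj S \<in> (stM G :: ('s \<times> (nat \<Rightarrow> nat)) measure) \<rightarrow>\<^sub>M count_space UNIV"
  unfolding proj_def[abs_def] by (rule proj_meas)

lemma marg_step:
  assumes lf: "\<And>i. i \<in> verts G \<Longrightarrow> finite (nbrs G i)"
    and S: "finite S" "S \<subseteq> verts G" and x: "x \<in> space (stM G :: ('s \<times> (nat \<Rightarrow> nat)) measure)"
  shows "distr (epoch_step B al dt lam P pol G t x) (count_space UNIV) (proj S) =
         measure_pmf (step_pmf G t S (proj (nb G S) x))"
proof -
  let ?N = "PiM (verts G) (\<lambda>_. count_space (UNIV::bool set))"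
  let ?Z = "PiM (verts G) (\<lambda>_. count_space (UNIV::nat set))"
  define A where "A = actions pol G t (snd x)"
  define Z where "Z = (\<lambda>a. PiM (verts G) (\<lambda>i. measure_pmf (bd_pmf B (arr_rate (lam (fst x)) G a i) al dt (snd x i))))"
  define K where "K = (\<lambda>a. bind (Z a) (\<lambda>z'. distr (measure_pmf (P (fst x))) (stM G) (\<lambda>s'. (s', z'))))"
  have nbS: "finite (nb G S)" "nb G S \<subseteq> verts G" using S lf by (auto intro!: nb_fin nb_sub)
  have ep: "epoch_step B al dt lam P pol G t x = bind A K"
    by (simp add: epoch_step_def A_def K_def Z_def)
  have setsA: "sets A = sets ?N" unfolding A_def actions_def by (intro sets_PiM_cong) auto
  have spA: "space A \<noteq> {}"
  proof -
    interpret prob_space A unfolding A_def actions_def by (intro prob_space_PiM) (simp add: prob_space_measure_pmf)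
    show ?thesis by (rule not_empty)
  qed
  have Km: "K \<in> ?N \<rightarrow>\<^sub>M subprob_algebra (stM G)"
    using measurable_comp[OF measurable_Pair1'[OF x, of ?N] inner_meas[OF lf, of B lam al dt P]]
    by (simp add: K_def Z_def o_def)
  then have KmA: "K \<in> A \<rightarrow>\<^sub>M subprob_algebra (stM G)"
    by (subst measurable_cong_sets[OF setsA refl])
  have pm: "proj S \<in> (stM G :: ('s \<times> (nat \<Rightarrow> nat)) measure) \<rightarrow>\<^sub>M count_space UNIV"
    using S by (rule proj_meas')
  have "distr (bind A K) (count_space UNIV) (proj S) = bind A (\<lambda>a. distr (K a) (count_space UNIV) (proj S))"
    by (rule distr_bind[OF KmA spA pm])
  also have "\<dots> = bind A (\<lambda>a. measure_pmf (bind_pmf (Pi_pmf S undefined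
        (\<lambda>i. bd_pmf B (arr_rate (lam (fst x)) G (restrict a (nb G S)) i) al dt (snd x i)))
        (\<lambda>z'. map_pmf (\<lambda>s'. (s', z')) (P (fst x)))))"
  proof (rule bind_cong[OF refl])
    fix a assume a: "a \<in> space A"
    have setsZ: "sets (Z a) = sets ?Z" unfolding Z_def by (intro sets_PiM_cong) auto
    have spZ: "space (Z a) \<noteq> {}"
    proof -
      interpret prob_space "Z a" unfolding Z_def by (intro prob_space_PiM) (simp add: prob_space_measure_pmf)
      show ?thesis by (rule not_empty)
    qed
    have pzm: "(\<lambda>z'. distr (measure_pmf (P (fst x))) (stM G) (\<lambda>s'. (s', z'))) \<in> Z a \<rightarrow>\<^sub>M subprob_algebra (stM G)"
      using pz_meas[of P "fst x" G] by (subst measurable_cong_sets[OF setsZ refl])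
    have rZ: "(\<lambda>z. restrict z S) \<in> Z a \<rightarrow>\<^sub>M count_space UNIV"
      using restrict_count_meas_UNIV[OF S, where 'b=nat] by (subst measurable_cong_sets[OF setsZ refl])
    have "distr (K a) (count_space UNIV) (proj S) =
        bind (Z a) (\<lambda>z'. distr (distr (measure_pmf (P (fst x))) (stM G) (\<lambda>s'. (s', z'))) (count_space UNIV) (proj S))"
      unfolding K_def by (rule distr_bind[OF pzm spZ pm])
    also have "\<dots> = bind (Z a) (\<lambda>z'. measure_pmf (map_pmf (\<lambda>s'. (s', restrict z' S)) (P (fst x))))"
    proof (rule bind_cong[OF refl])
      fix z' assume z': "z' \<in> space (Z a)"
      then have z'': "z' \<in> space ?Z" using setsZ sets_eq_imp_space_eq by blast
      have "(\<lambda>s'. (s', z')) \<in> measure_pmf (P (fst x)) \<rightarrow>\<^sub>M (stM G :: ('s \<times> (nat \<Rightarrow> nat)) measure)"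
        using z'' by (simp add: stM_def space_pair_measure)
      then show "distr (distr (measure_pmf (P (fst x))) (stM G) (\<lambda>s'. (s', z'))) (count_space UNIV) (proj S) =
          measure_pmf (map_pmf (\<lambda>s'. (s', restrict z' S)) (P (fst x)))"
        by (simp add: distr_distr[OF pm] map_pmf_rep_eq o_def proj_def)
    qed
    also have "\<dots> = bind (distr (Z a) (count_space UNIV) (\<lambda>z. restrict z S))
                         (\<lambda>w. measure_pmf (map_pmf (\<lambda>s'. (s', w)) (P (fst x))))"
      by (rule bind_distr[where K="count_space UNIV", OF rZ _ spZ, symmetric]) (auto simp: measure_pmf_in_subprob_algebra)
    also have "distr (Z a) (count_space UNIV) (\<lambda>z. restrict z S) =
        measure_pmf (Pi_pmf S undefined (\<lambda>i. bd_pmf B (arr_rate (lam (fst x)) G a i) al dt (snd x i)))"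
      unfolding Z_def by (rule PiM_restrict_pmf[OF S])
    also have "Pi_pmf S undefined (\<lambda>i. bd_pmf B (arr_rate (lam (fst x)) G a i) al dt (snd x i)) =
        Pi_pmf S undefined (\<lambda>i. bd_pmf B (arr_rate (lam (fst x)) G (restrict a (nb G S)) i) al dt (snd x i))"
      by (intro Pi_pmf_cong refl, subst arr_rate_restrict) (auto simp: nb_def)
    finally show "distr (K a) (count_space UNIV) (proj S) = measure_pmf (bind_pmf (Pi_pmf S undefined
        (\<lambda>i. bd_pmf B (arr_rate (lam (fst x)) G (restrict a (nb G S)) i) al dt (snd x i)))
        (\<lambda>z'. map_pmf (\<lambda>s'. (s', z')) (P (fst x))))"
      by (simp add: measure_pmf_bind)
  qed
  also have "\<dots> = bind (distr A (count_space UNIV) (\<lambda>a. restrict a (nb G S))) (\<lambda>a'. measure_pmf (bind_pmf (Pi_pmf S undefined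
        (\<lambda>i. bd_pmf B (arr_rate (lam (fst x)) G a' i) al dt (snd x i)))
        (\<lambda>z'. map_pmf (\<lambda>s'. (s', z')) (P (fst x)))))"
  proof (rule bind_distr[where K="count_space UNIV", symmetric, OF _ _ spA])
    show "(\<lambda>a. restrict a (nb G S)) \<in> A \<rightarrow>\<^sub>M count_space UNIV"
      using restrict_count_meas_UNIV[OF nbS, where 'b=bool] by (subst measurable_cong_sets[OF setsA refl])
  qed (auto simp: measure_pmf_in_subprob_algebra)
  also have "distr A (count_space UNIV) (\<lambda>a. restrict a (nb G S)) =
      measure_pmf (Pi_pmf (nb G S) undefined (\<lambda>j. bernoulli_pmf (pol t (snd x j))))"
    unfolding A_def actions_def by (rule PiM_restrict_pmf[OF nbS])
  also have "bind (measure_pmf (Pi_pmf (nb G S) undefined (\<lambda>j. bernoulli_pmf (pol t (snd x j))))) (\<lambda>a'. measure_pmf (bind_pmf (Pi_pmf S undefined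
        (\<lambda>i. bd_pmf B (arr_rate (lam (fst x)) G a' i) al dt (snd x i)))
        (\<lambda>z'. map_pmf (\<lambda>s'. (s', z')) (P (fst x))))) = measure_pmf (step_pmf G t S (proj (nb G S) x))"
  proof -
    have e1: "Pi_pmf (nb G S) undefined (\<lambda>j. bernoulli_pmf (pol t (snd (proj (nb G S) x) j))) =
              Pi_pmf (nb G S) undefined (\<lambda>j. bernoulli_pmf (pol t (snd x j)))"
      by (intro Pi_pmf_cong) (auto simp: proj_def)
    have e2: "Pi_pmf S undefined (\<lambda>i. bd_pmf B (arr_rate (lam (fst (proj (nb G S) x))) G a' i) al dt (snd (proj (nb G S) x) i)) =
              Pi_pmf S undefined (\<lambda>i. bd_pmf B (arr_rate (lam (fst x)) G a' i) al dt (snd x i))" for a'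
      using nb_mono[of S G] by (intro Pi_pmf_cong) (auto simp: proj_def)
    show ?thesis unfolding step_pmf_def e1 e2 by (simp add: measure_pmf_bind proj_def)
  qed
  finally show ?thesis using ep by simp
qed

lemma space_stM_ne: "space (stM G :: ('s \<times> (nat \<Rightarrow> nat)) measure) \<noteq> {}"
  by (simp add: stM_def space_pair_measure space_PiM PiE_eq_empty_iff)

lemma sd_sets:
  assumes lf: "\<And>i. i \<in> verts (fst g) \<Longrightarrow> finite (nbrs (fst g) i)"
  shows "sets (state_dist B al dt lam P l0 pol g t) = sets (stM (fst g))"
proof (induction t)
  case 0
  then show ?case by simp
next
  case (Suc t)
  have ne: "space (state_dist B al dt lam P l0 pol g t) \<noteq> {}"
    using space_stM_ne sets_eq_imp_space_eq[OF Suc] by simp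
  show ?case
    by (simp, rule sets_bind[OF _ ne])
       (use subprob_measurableD(2)[OF epoch_meas[OF lf, where B=B and al=al and dt=dt and lam=lam and P=P and pol=pol and t=t]] sets_eq_imp_space_eq[OF Suc] in auto)
qed

lemma ident:
  assumes lf: "\<And>i. i \<in> verts (fst g) \<Longrightarrow> finite (nbrs (fst g) i)"
  shows "finite S \<Longrightarrow> S \<subseteq> verts (fst g) \<Longrightarrow>
     distr (state_dist B al dt lam P l0 pol g t) (count_space UNIV) (proj S) = measure_pmf (Mt g t S)"
proof (induction t arbitrary: S)
  case 0
  have m: "(\<lambda>s. (s, restrict (snd g) (verts (fst g)))) \<in> measure_pmf l0 \<rightarrow>\<^sub>M (stM (fst g) :: ('s \<times> (nat \<Rightarrow> nat)) measure)"
    by (simp add: stM_def space_pair_measure space_PiM)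
  have d1: "distr (distr (measure_pmf l0) (stM (fst g)) (\<lambda>s. (s, restrict (snd g) (verts (fst g))))) (count_space UNIV) (proj S)
     = distr (measure_pmf l0) (count_space UNIV) (proj S \<circ> (\<lambda>s. (s, restrict (snd g) (verts (fst g)))))"
    by (rule distr_distr[OF proj_meas'[OF 0] m])
  have d2: "proj S \<circ> (\<lambda>s. (s, restrict (snd g) (verts (fst g)))) = (\<lambda>s. (s, restrict (snd g) S))"
    using 0 by (auto simp: proj_def fun_eq_iff restrict_def)
  show ?case
    unfolding Mt.simps state_dist.simps map_pmf_rep_eq using d1 unfolding d2 .
next
  case (Suc t)
  let ?SD = "state_dist B al dt lam P l0 pol g t"
  have sets: "sets ?SD = sets (stM (fst g))" by (rule sd_sets[OF lf])
  have sp: "space ?SD = space (stM (fst g))" using sets_eq_imp_space_eq[OF sets] .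
  have ne: "space ?SD \<noteq> {}" using space_stM_ne sp by simp
  have Km: "epoch_step B al dt lam P pol (fst g) t \<in> ?SD \<rightarrow>\<^sub>M subprob_algebra (stM (fst g))"
    using epoch_meas[OF lf] by (subst measurable_cong_sets[OF sets refl])
  have nbS: "finite (nb (fst g) S)" "nb (fst g) S \<subseteq> verts (fst g)" using Suc.prems lf by (auto intro!: nb_fin nb_sub)
  have pm: "proj (nb (fst g) S) \<in> ?SD \<rightarrow>\<^sub>M count_space UNIV"
    using proj_meas'[OF nbS] by (subst measurable_cong_sets[OF sets refl])
  have "distr (state_dist B al dt lam P l0 pol g (Suc t)) (count_space UNIV) (proj S) =
      bind ?SD (\<lambda>x. distr (epoch_step B al dt lam P pol (fst g) t x) (count_space UNIV) (proj S))"
    by (simp, rule distr_bind[OF Km ne proj_meas'[OF Suc.prems]])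
  also have "\<dots> = bind ?SD (\<lambda>x. measure_pmf (step_pmf (fst g) t S (proj (nb (fst g) S) x)))"
    by (rule bind_cong[OF refl], rule marg_step[OF lf Suc.prems]) (use sp in auto)
  also have "\<dots> = bind (distr ?SD (count_space UNIV) (proj (nb (fst g) S))) (\<lambda>y. measure_pmf (step_pmf (fst g) t S y))"
    by (rule bind_distr[where K="count_space UNIV", OF pm _ ne, symmetric]) (auto simp: measure_pmf_in_subprob_algebra)
  also have "\<dots> = measure_pmf (Mt g (Suc t) S)"
    by (simp add: Suc.IH[OF nbS] measure_pmf_bind)
  finally show ?case .
qed

definition Dloc :: "graph \<Rightarrow> nat \<Rightarrow> nat \<Rightarrow> 's \<times> (nat \<Rightarrow> nat) \<Rightarrow> real" where
  "Dloc G t i x = measure_pmf.expectation (Pi_pmf (nb G {i}) undefined (\<lambda>j. bernoulli_pmf (pol t (snd x j))))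
      (\<lambda>a. drops B (arr_rate (lam (fst x)) G a i) al dt (snd x i))"

lemma inner_eq:
  assumes lf: "\<And>i. i \<in> verts G \<Longrightarrow> finite (nbrs G i)" and i: "i \<in> verts G"
  shows "(\<integral>a. drops B (arr_rate (lam (fst x)) G a i) al dt (snd x i) \<partial>actions pol G t (snd x)) =
         Dloc G t i (proj (nb G {i}) x)"
proof -
  let ?S = "nb G {i}"
  have S: "finite ?S" "?S \<subseteq> verts G" using lf i by (auto intro!: nb_fin nb_sub)
  have iS: "i \<in> ?S" "nbrs G i \<subseteq> ?S" by (auto simp: nb_def)
  have setsA: "sets (actions pol G t (snd x)) = sets (PiM (verts G) (\<lambda>_. count_space (UNIV::bool set)))"
    unfolding actions_def by (intro sets_PiM_cong) auto
  have rm: "(\<lambda>a. restrict a ?S) \<in> actions pol G t (snd x) \<rightarrow>\<^sub>M count_space UNIV"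
    using restrict_count_meas_UNIV[OF S, where 'b=bool] by (subst measurable_cong_sets[OF setsA refl])
  have "(\<integral>a. drops B (arr_rate (lam (fst x)) G a i) al dt (snd x i) \<partial>actions pol G t (snd x)) =
        (\<integral>a. drops B (arr_rate (lam (fst x)) G (restrict a ?S) i) al dt (snd x i) \<partial>actions pol G t (snd x))"
    using iS by (intro Bochner_Integration.integral_cong refl) (simp add: arr_rate_restrict)
  also have "\<dots> = (\<integral>a. drops B (arr_rate (lam (fst x)) G a i) al dt (snd x i) \<partial>distr (actions pol G t (snd x)) (count_space UNIV) (\<lambda>a. restrict a ?S))"
    by (rule integral_distr[OF rm, symmetric]) simp
  also have "distr (actions pol G t (snd x)) (count_space UNIV) (\<lambda>a. restrict a ?S) =
      measure_pmf (Pi_pmf ?S undefined (\<lambda>j. bernoulli_pmf (pol t (snd x j))))"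
    unfolding actions_def by (rule PiM_restrict_pmf[OF S])
  also have "Pi_pmf ?S undefined (\<lambda>j. bernoulli_pmf (pol t (snd x j))) =
      Pi_pmf ?S undefined (\<lambda>j. bernoulli_pmf (pol t (snd (proj ?S x) j)))"
    by (intro Pi_pmf_cong) (auto simp: proj_def)
  finally show ?thesis using iS by (simp add: Dloc_def proj_def)
qed

lemma exp_drops_eq:
  assumes lf: "\<And>i. i \<in> verts (fst g) \<Longrightarrow> finite (nbrs (fst g) i)" and i: "i \<in> verts (fst g)"
  shows "exp_drops B al dt lam P l0 pol g i t = measure_pmf.expectation (Mt g t (nb (fst g) {i})) (Dloc (fst g) t i)"
proof -
  let ?S = "nb (fst g) {i}"
  let ?SD = "state_dist B al dt lam P l0 pol g t"
  have S: "finite ?S" "?S \<subseteq> verts (fst g)" using lf i by (auto intro!: nb_fin nb_sub)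
  have sets: "sets ?SD = sets (stM (fst g))" by (rule sd_sets[OF lf])
  have pm: "proj ?S \<in> ?SD \<rightarrow>\<^sub>M count_space UNIV"
    using proj_meas'[OF S] by (subst measurable_cong_sets[OF sets refl])
  have "exp_drops B al dt lam P l0 pol g i t = (\<integral>x. Dloc (fst g) t i (proj ?S x) \<partial>?SD)"
    unfolding exp_drops_def by (intro Bochner_Integration.integral_cong refl inner_eq lf i)
  also have "\<dots> = (\<integral>x. Dloc (fst g) t i x \<partial>distr ?SD (count_space UNIV) (proj ?S))"
    by (rule integral_distr[OF pm, symmetric]) simp
  also have "\<dots> = measure_pmf.expectation (Mt g t ?S) (Dloc (fst g) t i)"
    by (simp add: ident[OF lf S])
  finally show ?thesis .
qed

end

lemma Pi_pmf_reindex: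
  assumes fin: "finite A" and inj: "inj_on \<phi> A" and psi: "\<And>i. i \<in> A \<Longrightarrow> \<psi> (\<phi> i) = i"
  shows "Pi_pmf (\<phi> ` A) undefined (\<lambda>j. q (\<psi> j)) = map_pmf (\<lambda>a. restrict (a \<circ> \<psi>) (\<phi> ` A)) (Pi_pmf A undefined q)"
proof (rule pmf_eqI)
  fix f
  have finA: "finite (\<phi> ` A)" using fin by simp
  show "pmf (Pi_pmf (\<phi> ` A) undefined (\<lambda>j. q (\<psi> j))) f = pmf (map_pmf (\<lambda>a. restrict (a \<circ> \<psi>) (\<phi> ` A)) (Pi_pmf A undefined q)) f"
  proof (cases "\<forall>x. x \<notin> \<phi> ` A \<longrightarrow> f x = undefined")
    case True
    have pre: "(\<lambda>a. restrict (a \<circ> \<psi>) (\<phi> ` A)) -` {f} = Pi A (\<lambda>i. {f (\<phi> i)})"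
    proof (intro set_eqI iffI)
      fix a assume "a \<in> (\<lambda>a. restrict (a \<circ> \<psi>) (\<phi> ` A)) -` {f}"
      then have h: "restrict (a \<circ> \<psi>) (\<phi> ` A) = f" by simp
      show "a \<in> Pi A (\<lambda>i. {f (\<phi> i)})"
      proof
        fix i assume i: "i \<in> A"
        have "f (\<phi> i) = restrict (a \<circ> \<psi>) (\<phi> ` A) (\<phi> i)" using h by simp
        also have "\<dots> = a i" using i psi[OF i] by simp
        finally show "a i \<in> {f (\<phi> i)}" by simp
      qed
    next
      fix a assume "a \<in> Pi A (\<lambda>i. {f (\<phi> i)})"
      then show "a \<in> (\<lambda>a. restrict (a \<circ> \<psi>) (\<phi> ` A)) -` {f}"
        using True psi by (auto simp: fun_eq_iff restrict_def Pi_def)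
    qed
    have "pmf (map_pmf (\<lambda>a. restrict (a \<circ> \<psi>) (\<phi> ` A)) (Pi_pmf A undefined q)) f = (\<Prod>i\<in>A. pmf (q i) (f (\<phi> i)))"
      unfolding pmf_map pre using fin by (simp add: measure_Pi_pmf_Pi measure_pmf_single)
    also have "\<dots> = (\<Prod>j\<in>\<phi> ` A. pmf (q (\<psi> j)) (f j))"
      using inj psi by (simp add: prod.reindex)
    finally show ?thesis using True finA by (simp add: pmf_Pi)
  next
    case False
    then have "(\<lambda>a. restrict (a \<circ> \<psi>) (\<phi> ` A)) -` {f} = {}" by (auto simp: restrict_def)
    then show ?thesis using False finA by (auto simp: pmf_Pi pmf_map)
  qed
qed

definition relab :: "(nat \<Rightarrow> nat) \<Rightarrow> nat set \<Rightarrow> 's \<times> (nat \<Rightarrow> nat) \<Rightarrow> 's \<times> (nat \<Rightarrow> nat)" where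
  "relab \<psi> T x = (fst x, restrict (snd x \<circ> \<psi>) T)"

locale liso =
  fixes G G' :: graph and z z' :: "nat \<Rightarrow> nat" and \<phi> :: "nat \<Rightarrow> nat" and W W0 :: "nat set"
  assumes inj: "inj_on \<phi> W" and W0W: "W0 \<subseteq> W"
    and nbrW: "\<And>v. v \<in> W0 \<Longrightarrow> nbrs G v \<subseteq> W"
    and nbr: "\<And>v. v \<in> W0 \<Longrightarrow> nbrs G' (\<phi> v) = \<phi> ` nbrs G v"
    and mark: "\<And>v. v \<in> W \<Longrightarrow> z' (\<phi> v) = z v"
begin

definition "\<psi> = inv_into W \<phi>"

lemma psi: "v \<in> W \<Longrightarrow> \<psi> (\<phi> v) = v"
  unfolding \<psi>_def using inj by simp

primrec Good :: "nat \<Rightarrow> nat set \<Rightarrow> bool" where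
  "Good 0 S = (S \<subseteq> W)"
| "Good (Suc t) S = (nb G S \<subseteq> W0 \<and> Good t (nb G S))"

lemma Good_sub: "Good t S \<Longrightarrow> S \<subseteq> W"
  by (cases t) (use W0W nb_mono[of S G] in auto)

lemma nb_img: "S \<subseteq> W0 \<Longrightarrow> nb G' (\<phi> ` S) = \<phi> ` nb G S"
  by (auto simp: nb_def nbr subset_eq)

lemma card_nbrs: "v \<in> W0 \<Longrightarrow> card (nbrs G' (\<phi> v)) = card (nbrs G v)"
  using nbr[of v] nbrW[of v] inj by (simp add: card_image inj_on_subset)

lemma arr_rate_tr:
  assumes i: "i \<in> W0" and ni: "nbrs G i \<subseteq> W0" and T: "insert i (nbrs G i) \<subseteq> A" and AW: "A \<subseteq> W"
  shows "arr_rate l G' (restrict (a \<circ> \<psi>) (\<phi> ` A)) (\<phi> i) = arr_rate l G a i"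
proof -
  have "(\<Sum>j\<in>nbrs G' (\<phi> i). of_bool (restrict (a \<circ> \<psi>) (\<phi> ` A) j) / real (card (nbrs G' j))) =
        (\<Sum>j\<in>\<phi> ` nbrs G i. of_bool (restrict (a \<circ> \<psi>) (\<phi> ` A) j) / real (card (nbrs G' j)))"
    using nbr[OF i] by simp
  also have "\<dots> = (\<Sum>j\<in>nbrs G i. of_bool (restrict (a \<circ> \<psi>) (\<phi> ` A) (\<phi> j)) / real (card (nbrs G' (\<phi> j))))"
    using inj nbrW[OF i] by (subst sum.reindex) (auto intro: inj_on_subset)
  also have "\<dots> = (\<Sum>j\<in>nbrs G i. of_bool (a j) / real (card (nbrs G j)))"
    using ni T AW by (intro sum.cong refl) (auto simp: card_nbrs psi subset_eq)
  finally show ?thesis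
    using T AW i W0W by (auto simp: arr_rate_def psi)
qed

context
  fixes B :: nat and al dt :: real and lam :: "'s::finite \<Rightarrow> real" and P :: "'s \<Rightarrow> 's pmf"
    and l0 :: "'s pmf" and pol :: "nat \<Rightarrow> nat \<Rightarrow> real"
begin

lemma step_tr:
  assumes S: "finite S" and nbS: "nb G S \<subseteq> W0" and finn: "\<And>i. i \<in> S \<Longrightarrow> finite (nbrs G i)"
  shows "step_pmf B al dt lam P pol G' t (\<phi> ` S) (relab \<psi> (\<phi> ` nb G S) x) =
         map_pmf (relab \<psi> (\<phi> ` S)) (step_pmf B al dt lam P pol G t S x)"
proof -
  have SW0: "S \<subseteq> W0" using nbS nb_mono[of S G] by auto
  have finnb: "finite (nb G S)" using S finn by (rule nb_fin)
  have nbW: "nb G S \<subseteq> W" using nbS W0W by auto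
  have SW: "S \<subseteq> W" using SW0 W0W by auto
  have e1: "Pi_pmf (nb G' (\<phi> ` S)) undefined (\<lambda>j. bernoulli_pmf (pol t (snd (relab \<psi> (\<phi> ` nb G S) x) j))) =
     map_pmf (\<lambda>a. restrict (a \<circ> \<psi>) (\<phi> ` nb G S)) (Pi_pmf (nb G S) undefined (\<lambda>j. bernoulli_pmf (pol t (snd x j))))"
  proof -
    have "Pi_pmf (nb G' (\<phi> ` S)) undefined (\<lambda>j. bernoulli_pmf (pol t (snd (relab \<psi> (\<phi> ` nb G S) x) j))) =
          Pi_pmf (\<phi> ` nb G S) undefined (\<lambda>j. bernoulli_pmf (pol t (snd x (\<psi> j))))"
      using nb_img[OF SW0] by (intro Pi_pmf_cong) (auto simp: relab_def)
    also have "\<dots> = map_pmf (\<lambda>a. restrict (a \<circ> \<psi>) (\<phi> ` nb G S)) (Pi_pmf (nb G S) undefined (\<lambda>j. bernoulli_pmf (pol t (snd x j))))"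
      using finnb inj nbW psi by (intro Pi_pmf_reindex[where q="\<lambda>j. bernoulli_pmf (pol t (snd x j))"]) (auto intro: inj_on_subset)
    finally show ?thesis .
  qed
  have e2: "Pi_pmf (\<phi> ` S) undefined (\<lambda>i. bd_pmf B (arr_rate (lam (fst (relab \<psi> (\<phi> ` nb G S) x))) G' (restrict (a \<circ> \<psi>) (\<phi> ` nb G S)) i) al dt (snd (relab \<psi> (\<phi> ` nb G S) x) i)) =
     map_pmf (\<lambda>a. restrict (a \<circ> \<psi>) (\<phi> ` S)) (Pi_pmf S undefined (\<lambda>i. bd_pmf B (arr_rate (lam (fst x)) G a i) al dt (snd x i)))" for a
  proof -
    have "Pi_pmf (\<phi> ` S) undefined (\<lambda>i. bd_pmf B (arr_rate (lam (fst (relab \<psi> (\<phi> ` nb G S) x))) G' (restrict (a \<circ> \<psi>) (\<phi> ` nb G S)) i) al dt (snd (relab \<psi> (\<phi> ` nb G S) x) i)) =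
          Pi_pmf (\<phi> ` S) undefined (\<lambda>i. bd_pmf B (arr_rate (lam (fst x)) G a (\<psi> i)) al dt (snd x (\<psi> i)))"
    proof (intro Pi_pmf_cong refl)
      fix i' assume "i' \<in> \<phi> ` S"
      then obtain i where i: "i \<in> S" "i' = \<phi> i" by auto
      have "nbrs G i \<subseteq> W0" "insert i (nbrs G i) \<subseteq> nb G S" using i nbS by (auto simp: nb_def)
      then have "arr_rate (lam (fst x)) G' (restrict (a \<circ> \<psi>) (\<phi> ` nb G S)) (\<phi> i) = arr_rate (lam (fst x)) G a i"
        using i SW0 nbW by (intro arr_rate_tr) auto
      moreover have "\<phi> i \<in> \<phi> ` nb G S" using i nb_mono[of S G] by auto
      ultimately show "bd_pmf B (arr_rate (lam (fst (relab \<psi> (\<phi> ` nb G S) x))) G' (restrict (a \<circ> \<psi>) (\<phi> ` nb G S)) i') al dt (snd (relab \<psi> (\<phi> ` nb G S) x) i') =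
          bd_pmf B (arr_rate (lam (fst x)) G a (\<psi> i')) al dt (snd x (\<psi> i'))"
        using i SW psi[of i] by (auto simp: relab_def)
    qed
    also have "\<dots> = map_pmf (\<lambda>a. restrict (a \<circ> \<psi>) (\<phi> ` S)) (Pi_pmf S undefined (\<lambda>i. bd_pmf B (arr_rate (lam (fst x)) G a i) al dt (snd x i)))"
      using S inj SW psi by (intro Pi_pmf_reindex[where q="\<lambda>i. bd_pmf B (arr_rate (lam (fst x)) G a i) al dt (snd x i)"]) (auto intro: inj_on_subset)
    finally show ?thesis .
  qed
  show ?thesis
    unfolding step_pmf_def e1 bind_map_pmf e2 map_bind_pmf map_pmf_comp
    by (simp add: relab_def)
qed

lemma Mt_tr:
  assumes finn: "\<And>i. finite (nbrs G i)"
  shows "finite S \<Longrightarrow> Good t S \<Longrightarrow> Mt B al dt lam P l0 pol (G', z') t (\<phi> ` S) = map_pmf (relab \<psi> (\<phi> ` S)) (Mt B al dt lam P l0 pol (G, z) t S)"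
proof (induction t arbitrary: S)
  case 0
  then show ?case
    by (auto simp: map_pmf_comp relab_def fun_eq_iff restrict_def mark psi subset_eq intro!: map_pmf_cong)
next
  case (Suc t)
  have nbS: "nb G S \<subseteq> W0" "Good t (nb G S)" using Suc.prems by auto
  have SW0: "S \<subseteq> W0" using nbS nb_mono[of S G] by auto
  have fin: "finite (nb G S)" using Suc.prems finn by (intro nb_fin) auto
  show ?case
    using Suc.IH[OF fin nbS(2)] nb_img[OF SW0]
    by (simp add: bind_map_pmf map_bind_pmf step_tr[OF Suc.prems(1) nbS(1) finn])
qed

lemma Dloc_tr:
  assumes i: "nb G {i} \<subseteq> W0" and fin: "finite (nbrs G i)"
  shows "Dloc B al dt lam pol G' t (\<phi> i) (relab \<psi> (\<phi> ` nb G {i}) x) = Dloc B al dt lam pol G t i x"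
proof -
  have iW0: "{i} \<subseteq> W0" "i \<in> W0" "nbrs G i \<subseteq> W0" using i by (auto simp: nb_def)
  have finnb: "finite (nb G {i})" using fin by (intro nb_fin) auto
  have nbW: "nb G {i} \<subseteq> W" using i W0W by auto
  have nbi: "nb G' {\<phi> i} = \<phi> ` nb G {i}" using nb_img[OF iW0(1)] by simp
  have e1: "Pi_pmf (nb G' {\<phi> i}) undefined (\<lambda>j. bernoulli_pmf (pol t (snd (relab \<psi> (\<phi> ` nb G {i}) x) j))) =
     map_pmf (\<lambda>a. restrict (a \<circ> \<psi>) (\<phi> ` nb G {i})) (Pi_pmf (nb G {i}) undefined (\<lambda>j. bernoulli_pmf (pol t (snd x j))))"
  proof -
    have "Pi_pmf (nb G' {\<phi> i}) undefined (\<lambda>j. bernoulli_pmf (pol t (snd (relab \<psi> (\<phi> ` nb G {i}) x) j))) =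
          Pi_pmf (\<phi> ` nb G {i}) undefined (\<lambda>j. bernoulli_pmf (pol t (snd x (\<psi> j))))"
      using nbi by (intro Pi_pmf_cong) (auto simp: relab_def)
    also have "\<dots> = map_pmf (\<lambda>a. restrict (a \<circ> \<psi>) (\<phi> ` nb G {i})) (Pi_pmf (nb G {i}) undefined (\<lambda>j. bernoulli_pmf (pol t (snd x j))))"
      using finnb inj nbW psi by (intro Pi_pmf_reindex[where q="\<lambda>j. bernoulli_pmf (pol t (snd x j))"]) (auto intro: inj_on_subset)
    finally show ?thesis .
  qed
  have ar: "arr_rate l G' (restrict (a \<circ> \<psi>) (\<phi> ` nb G {i})) (\<phi> i) = arr_rate l G a i" for l a
    using iW0 nbW by (intro arr_rate_tr) (auto simp: nb_def)
  have sx: "snd (relab \<psi> (\<phi> ` nb G {i}) x) (\<phi> i) = snd x i"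
    using psi[of i] nbW by (auto simp: relab_def nb_def)
  show ?thesis
    unfolding Dloc_def e1 integral_map_pmf ar sx by (simp add: relab_def)
qed

lemma ED_tr:
  assumes lf: "\<And>i. i \<in> verts G \<Longrightarrow> finite (nbrs G i)" and lf': "\<And>i. i \<in> verts G' \<Longrightarrow> finite (nbrs G' i)"
    and finn: "\<And>i. finite (nbrs G i)"
    and r: "r \<in> verts G" "\<phi> r \<in> verts G'" and good: "Good t (nb G {r})" and nbr0: "nb G {r} \<subseteq> W0"
  shows "exp_drops B al dt lam P l0 pol (G', z') (\<phi> r) t = exp_drops B al dt lam P l0 pol (G, z) r t"
proof -
  have r0: "{r} \<subseteq> W0" using nbr0 by (auto simp: nb_def)
  have fin: "finite (nb G {r})" using finn by (intro nb_fin) auto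
  have "exp_drops B al dt lam P l0 pol (G', z') (\<phi> r) t =
        measure_pmf.expectation (Mt B al dt lam P l0 pol (G', z') t (nb G' {\<phi> r})) (Dloc B al dt lam pol G' t (\<phi> r))"
    using exp_drops_eq[of "(G', z')"] lf' r by simp
  also have "nb G' {\<phi> r} = \<phi> ` nb G {r}" using nb_img[OF r0] by simp
  also have "Mt B al dt lam P l0 pol (G', z') t (\<phi> ` nb G {r}) = map_pmf (relab \<psi> (\<phi> ` nb G {r})) (Mt B al dt lam P l0 pol (G, z) t (nb G {r}))"
    by (rule Mt_tr[OF finn fin good])
  also have "measure_pmf.expectation (map_pmf (relab \<psi> (\<phi> ` nb G {r})) (Mt B al dt lam P l0 pol (G, z) t (nb G {r}))) (Dloc B al dt lam pol G' t (\<phi> r))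
      = measure_pmf.expectation (Mt B al dt lam P l0 pol (G, z) t (nb G {r})) (Dloc B al dt lam pol G t r)"
    unfolding integral_map_pmf using Dloc_tr[OF nbr0 finn] by simp
  also have "\<dots> = exp_drops B al dt lam P l0 pol (G, z) r t"
  proof -
    have "exp_drops B al dt lam P l0 pol (G, z) r t = measure_pmf.expectation (Mt B al dt lam P l0 pol (G, z) t (nb (fst (G, z)) {r})) (Dloc B al dt lam pol (fst (G, z)) t r)"
      by (rule exp_drops_eq) (use lf r in auto)
    then show ?thesis by simp
  qed
  finally show ?thesis .
qed

end
end


lemma verts_induced[simp]: "verts (induced G S) = verts G \<inter> S"
  by (simp add: induced_def verts_def)

lemma adj_induced[simp]: "adj (induced G S) i j = (adj G i j \<and> i \<in> S \<and> j \<in> S)"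
  by (simp add: induced_def adj_def)

lemma ballset_Suc_mono: "ballset G k r \<subseteq> ballset G (Suc k) r"
  by auto

lemma ballset_mono: "j \<le> k \<Longrightarrow> ballset G j r \<subseteq> ballset G k r"
proof (induction k)
  case 0 then show ?case by simp
next
  case (Suc k)
  then show ?case using ballset_Suc_mono[of G k r] by (cases "j = Suc k") auto
qed

lemma root_ballset: "r \<in> ballset G k r"
  using ballset_mono[of 0 k G r] by auto

lemma ballset_sub_verts:
  assumes wf: "wf_graph G" and r: "r \<in> verts G"
  shows "ballset G k r \<subseteq> verts G"
  by (induction k) (use wf r in \<open>auto simp: wf_graph_def\<close>)

lemma ballset_Suc_nbrs:
  assumes wf: "wf_graph G"
  shows "ballset G (Suc k) r = ballset G k r \<union> (\<Union>j\<in>ballset G k r. nbrs G j)"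
  using wf by (auto simp: nbrs_def wf_graph_def)

lemma nb_ballset:
  assumes wf: "wf_graph G"
  shows "nb G (ballset G m r) = ballset G (Suc m) r"
  using ballset_Suc_nbrs[OF wf] by (simp add: nb_def)

lemma nbrs_ballset: "v \<in> ballset G k r \<Longrightarrow> nbrs G v \<subseteq> ballset G (Suc k) r"
  by (auto simp: nbrs_def)

lemma ballset_fin:
  assumes wf: "wf_graph G" and r: "r \<in> verts G" and lf: "\<And>i. i \<in> verts G \<Longrightarrow> finite (nbrs G i)"
  shows "finite (ballset G k r)"
proof (induction k)
  case 0 then show ?case by simp
next
  case (Suc k)
  have "\<And>j. j \<in> ballset G k r \<Longrightarrow> finite (nbrs G j)"
    using ballset_sub_verts[OF wf r] lf by auto
  then show ?case using Suc by (simp only: ballset_Suc_nbrs[OF wf]) auto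
qed

lemma nbrs_outside:
  assumes "wf_graph G" "i \<notin> verts G" shows "nbrs G i = {}"
  using assms by (auto simp: nbrs_def wf_graph_def)

lemma lf_all:
  assumes "wf_graph G" "\<And>i. i \<in> verts G \<Longrightarrow> finite (nbrs G i)" shows "finite (nbrs G i)"
  using assms nbrs_outside[OF assms(1)] by (cases "i \<in> verts G") auto

declare ballset.simps(2)[simp del]

lemma iso_liso:
  assumes wf: "wf_graph G" "wf_graph G'" and r: "r \<in> verts G" "r' \<in> verts G'"
    and iso: "rg_iso (ball (Suc k) ((G, z), r)) (ball (Suc k) ((G', z'), r'))"
  obtains \<phi> where "liso G G' z z' \<phi> (ballset G (Suc k) r) (ballset G k r)" "\<phi> r = r'"
proof -
  let ?W = "ballset G (Suc k) r" and ?W' = "ballset G' (Suc k) r'"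
  have W: "?W \<subseteq> verts G" "?W' \<subseteq> verts G'" by (rule ballset_sub_verts[OF wf(1) r(1)], rule ballset_sub_verts[OF wf(2) r(2)])
  from iso obtain \<phi> where bij: "bij_betw \<phi> ?W ?W'" and root: "\<phi> r = r'"
    and adjq: "\<And>i j. i \<in> ?W \<Longrightarrow> j \<in> ?W \<Longrightarrow> adj G i j \<longleftrightarrow> adj G' (\<phi> i) (\<phi> j)"
    and mk: "\<And>i. i \<in> ?W \<Longrightarrow> z i = z' (\<phi> i)"
  proof -
    from iso obtain \<phi> where
      "bij_betw \<phi> (verts G \<inter> ?W) (verts G' \<inter> ?W')" "\<phi> r = r'"
      "\<forall>i\<in>verts G \<inter> ?W. \<forall>j\<in>verts G \<inter> ?W. (adj G i j \<and> i \<in> ?W \<and> j \<in> ?W) \<longleftrightarrow> (adj G' (\<phi> i) (\<phi> j) \<and> \<phi> i \<in> ?W' \<and> \<phi> j \<in> ?W')"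
      "\<forall>i\<in>verts G \<inter> ?W. z i = z' (\<phi> i)"
      unfolding rg_iso_def ball_def by auto
    note h = this
    have e: "verts G \<inter> ?W = ?W" "verts G' \<inter> ?W' = ?W'" using W by auto
    show ?thesis
    proof (rule that[of \<phi>])
      show "bij_betw \<phi> ?W ?W'" using h(1) e by simp
      show "\<phi> r = r'" by (rule h(2))
      fix i j assume ij: "i \<in> ?W" "j \<in> ?W"
      have "\<phi> i \<in> ?W'" "\<phi> j \<in> ?W'" using h(1) e ij by (auto simp: bij_betw_def)
      then show "adj G i j \<longleftrightarrow> adj G' (\<phi> i) (\<phi> j)" using h(3) e ij by auto
    next
      fix i assume "i \<in> ?W" then show "z i = z' (\<phi> i)" using h(4) e by auto
    qed
  qed
  have inW: "\<phi> i \<in> ?W'" if "i \<in> ?W" for i using bij that by (auto simp: bij_betw_def)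
  have img: "\<phi> ` ballset G j r \<subseteq> ballset G' j r'" if "j \<le> Suc k" for j
    using that
  proof (induction j)
    case 0 then show ?case using root by simp
  next
    case (Suc j)
    have sub: "ballset G (Suc j) r \<subseteq> ?W" using ballset_mono[OF Suc.prems] .
    show ?case
    proof
      fix y assume "y \<in> \<phi> ` ballset G (Suc j) r"
      then obtain l where l: "l \<in> ballset G (Suc j) r" "y = \<phi> l" by auto
      show "y \<in> ballset G' (Suc j) r'"
      proof (cases "l \<in> ballset G j r")
        case True then show ?thesis using Suc l ballset_Suc_mono[of G' j r'] by auto
      next
        case False
        then obtain v where v: "v \<in> ballset G j r" "adj G v l" using l by (auto simp: ballset.simps(2))
        have "v \<in> ?W" "l \<in> ?W" using v l sub ballset_Suc_mono[of G j r] by auto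
        then have "adj G' (\<phi> v) (\<phi> l)" using adjq v by auto
        moreover have "\<phi> v \<in> ballset G' j r'" using Suc v by auto
        ultimately show ?thesis using l by (auto simp: ballset.simps(2))
      qed
    qed
  qed
  have "liso G G' z z' \<phi> ?W (ballset G k r)"
  proof
    show "inj_on \<phi> ?W" using bij by (simp add: bij_betw_def)
    show "ballset G k r \<subseteq> ?W" by (rule ballset_Suc_mono)
    fix v
    show "v \<in> ballset G k r \<Longrightarrow> nbrs G v \<subseteq> ?W" by (rule nbrs_ballset)
    show "v \<in> ?W \<Longrightarrow> z' (\<phi> v) = z v" using mk by simp
    assume v: "v \<in> ballset G k r"
    have vW: "v \<in> ?W" using v ballset_Suc_mono by blast
    show "nbrs G' (\<phi> v) = \<phi> ` nbrs G v"
    proof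
      show "\<phi> ` nbrs G v \<subseteq> nbrs G' (\<phi> v)"
      proof
        fix y assume "y \<in> \<phi> ` nbrs G v"
        then obtain j where j: "j \<in> nbrs G v" "y = \<phi> j" by auto
        have jW: "j \<in> ?W" using nbrs_ballset[OF v] j by auto
        then show "y \<in> nbrs G' (\<phi> v)"
          using adjq[OF vW jW] j inW[OF jW] W by (auto simp: nbrs_def)
      qed
      show "nbrs G' (\<phi> v) \<subseteq> \<phi> ` nbrs G v"
      proof
        fix u assume u: "u \<in> nbrs G' (\<phi> v)"
        have "\<phi> v \<in> ballset G' k r'" using img[of k] v by auto
        then have "u \<in> ?W'" using u nbrs_ballset by blast
        then obtain w where w: "w \<in> ?W" "u = \<phi> w" using bij by (auto simp: bij_betw_def)
        have "adj G v w" using adjq[OF vW w(1)] u w by (auto simp: nbrs_def)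
        then show "u \<in> \<phi> ` nbrs G v" using w W by (auto simp: nbrs_def)
      qed
    qed
  qed
  then show ?thesis using that root by blast
qed



lemma (in liso) Good_ball:
  assumes W: "W = ballset G (Suc k) r" and W0: "W0 = ballset G k r" and wf: "wf_graph G"
  shows "m + t + 1 \<le> Suc k \<Longrightarrow> Good t (ballset G m r)"
proof (induction t arbitrary: m)
  case 0
  have "ballset G m r \<subseteq> W" using 0 W ballset_mono[of m "Suc k" G r] by simp
  then show ?case by simp
next
  case (Suc t)
  have "nb G (ballset G m r) = ballset G (Suc m) r" by (rule nb_ballset[OF wf])
  moreover have "ballset G (Suc m) r \<subseteq> W0" using W0 Suc.prems ballset_mono[of "Suc m" k G r] by simp
  moreover have "Good t (ballset G (Suc m) r)" using Suc.IH[of "Suc m"] Suc.prems by simp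
  ultimately show ?case by simp
qed

lemma F_inv:
  fixes lam :: "'s::finite \<Rightarrow> real"
  assumes wf: "wf_graph G" "wf_graph G'" and lf: "\<And>i. i \<in> verts G \<Longrightarrow> finite (nbrs G i)"
    and lf': "\<And>i. i \<in> verts G' \<Longrightarrow> finite (nbrs G' i)"
    and r: "r \<in> verts G" "r' \<in> verts G'"
    and iso: "rg_iso (ball (Suc k) ((G, z), r)) (ball (Suc k) ((G', z'), r'))" and tk: "t + 2 \<le> Suc k"
  shows "exp_drops B al dt lam P l0 pol (G', z') r' t = exp_drops B al dt lam P l0 pol (G, z) r t"
proof -
  obtain \<phi> where L: "liso G G' z z' \<phi> (ballset G (Suc k) r) (ballset G k r)" and root: "\<phi> r = r'"
    using iso_liso[OF wf r iso] by blast
  interpret liso G G' z z' \<phi> "ballset G (Suc k) r" "ballset G k r" by (rule L)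
  have nb1: "nb G {r} = ballset G 1 r" using nb_ballset[OF wf(1), of 0 r] by simp
  have good: "Good t (nb G {r})" unfolding nb1 by (rule Good_ball[OF refl refl wf(1)]) (use tk in simp)
  have sub: "nb G {r} \<subseteq> ballset G k r" unfolding nb1 by (rule ballset_mono) (use tk in simp)
  show ?thesis
    using ED_tr[OF lf lf' lf_all[OF wf(1) lf] r(1) _ good sub] root r by simp
qed

lemma deg_inv:
  assumes wf: "wf_graph G" "wf_graph G'" and r: "r \<in> verts G" "r' \<in> verts G'"
    and iso: "rg_iso (ball (Suc k) ((G, z), r)) (ball (Suc k) ((G', z'), r'))"
  shows "card (nbrs G' r') = card (nbrs G r)"
proof -
  obtain \<phi> where L: "liso G G' z z' \<phi> (ballset G (Suc k) r) (ballset G k r)" and root: "\<phi> r = r'"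
    using iso_liso[OF wf r iso] by blast
  interpret liso G G' z z' \<phi> "ballset G (Suc k) r" "ballset G k r" by (rule L)
  show ?thesis using card_nbrs[of r] root root_ballset[of r G k] by simp
qed

lemma comp_closed:
  assumes "v \<in> comp_set G i" "adj G v j" shows "j \<in> comp_set G i"
proof -
  obtain k where "v \<in> ballset G k i" using assms by (auto simp: comp_set_def)
  then have "j \<in> ballset G (Suc k) i" using assms by (auto simp: ballset.simps(2))
  then show ?thesis unfolding comp_set_def by blast
qed

lemma root_comp: "i \<in> comp_set G i"
  unfolding comp_set_def using root_ballset[of i G 0] by blast

lemma comp_exp:
  fixes lam :: "'s::finite \<Rightarrow> real"
  assumes wf: "wf_graph G" and lf: "\<And>i. i \<in> verts G \<Longrightarrow> finite (nbrs G i)" and i: "i \<in> verts G"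
  shows "exp_drops B al dt lam P l0 pol (G, z) i t =
         exp_drops B al dt lam P l0 pol (induced G (comp_set G i), z) i t"
proof -
  let ?C = "comp_set G i"
  let ?Gc = "induced G ?C"
  have nbsub: "nbrs ?Gc v \<subseteq> nbrs G v" for v by (auto simp: nbrs_def)
  have nbeq: "nbrs G v = nbrs ?Gc v" if "v \<in> ?C" for v
    using that comp_closed[of v G i] by (auto simp: nbrs_def)
  interpret liso ?Gc G z z id ?C ?C
    by unfold_locales (auto simp: nbrs_def nbeq intro: comp_closed)
  have lfc: "\<And>v. finite (nbrs ?Gc v)" using lf_all[OF wf lf] nbsub finite_subset by metis
  have good: "S \<subseteq> ?C \<Longrightarrow> Good t S" for S
  proof (induction t arbitrary: S)
    case 0 then show ?case by simp
  next
    case (Suc t)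
    have "nb ?Gc S \<subseteq> ?C" using Suc.prems by (auto simp: nb_def nbrs_def)
    then show ?case using Suc.IH by simp
  qed
  have iC: "i \<in> verts ?Gc" using i root_comp[of i G] by simp
  have "nb ?Gc {i} \<subseteq> ?C" using root_comp[of i G] by (auto simp: nb_def nbrs_def)
  moreover have lfc': "\<And>v. v \<in> verts ?Gc \<Longrightarrow> finite (nbrs ?Gc v)" using lfc by simp
  ultimately show ?thesis
    using ED_tr[OF lfc' lf lfc iC _ good] i by simp
qed


lemma prob_integral_abs_le:
  fixes f :: "_ \<Rightarrow> real"
  assumes "prob_space M" and b: "\<And>x. x \<in> space M \<Longrightarrow> \<bar>f x\<bar> \<le> C"
  shows "\<bar>integral\<^sup>L M f\<bar> \<le> C"
proof -
  interpret prob_space M by fact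
  obtain x where x: "x \<in> space M" using not_empty by blast
  have C0: "0 \<le> C" using b[OF x] by linarith
  show ?thesis
  proof (cases "integrable M f")
    case True
    have "integral\<^sup>L M f \<le> C" using True b by (intro integral_le_const AE_I2) (auto simp: abs_le_iff)
    moreover have "- C \<le> integral\<^sup>L M f"
    proof (intro integral_ge_const AE_I2 True)
      fix x assume "x \<in> space M"
      then have "\<bar>f x\<bar> \<le> C" by (rule b)
      then show "- C \<le> f x" by linarith
    qed
    ultimately show ?thesis by linarith
  next
    case False then show ?thesis using C0 by (simp add: not_integrable_integral_eq)
  qed
qed

lemma qgen_bound: "0 \<le> r \<Longrightarrow> 0 \<le> al \<Longrightarrow> \<bar>qgen B r al x y\<bar> \<le> r + al"
  unfolding qgen_def by auto

lemma qpow_bound: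
  assumes "0 \<le> r" "0 \<le> al"
  shows "\<bar>qpow B r al k x y\<bar> \<le> (real (Suc B) * (r + al)) ^ k"
proof (induction k arbitrary: y)
  case 0 then show ?case by simp
next
  case (Suc k)
  have "\<bar>qpow B r al (Suc k) x y\<bar> \<le> (\<Sum>w\<le>B. \<bar>qpow B r al k x w * qgen B r al w y\<bar>)"
    by (simp add: sum_abs)
  also have "\<dots> \<le> (\<Sum>w\<le>B. (real (Suc B) * (r + al)) ^ k * (r + al))"
  proof (rule sum_mono)
    fix w
    have "\<bar>qpow B r al k x w\<bar> * \<bar>qgen B r al w y\<bar> \<le> (real (Suc B) * (r + al)) ^ k * (r + al)"
      by (rule mult_mono[OF Suc.IH qgen_bound[OF assms]]) (use assms in auto)
    then show "\<bar>qpow B r al k x w * qgen B r al w y\<bar> \<le> (real (Suc B) * (r + al)) ^ k * (r + al)"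
      by (simp only: abs_mult)
  qed
  also have "\<dots> = (real (Suc B) * (r + al)) ^ Suc k" by (simp add: algebra_simps)
  finally show ?case .
qed

lemma bd_trans_bound:
  assumes "0 \<le> r" "0 \<le> al" "0 \<le> s"
  shows "\<bar>bd_trans B r al s x y\<bar> \<le> exp (s * (real (Suc B) * (r + al)))"
proof -
  define c where "c = real (Suc B) * (r + al)"
  have c0: "0 \<le> c" using assms by (simp add: c_def)
  define b where "b = (\<lambda>k. (s * c) ^ k / fact k)"
  have bs: "b sums exp (s * c)" using exp_converges[of "s * c"] by (simp add: b_def divide_inverse mult.commute)
  have le: "\<bar>s ^ k / fact k * qpow B r al k x y\<bar> \<le> b k" for k
  proof -
    have "\<bar>s ^ k / fact k * qpow B r al k x y\<bar> = s ^ k / fact k * \<bar>qpow B r al k x y\<bar>"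
      using assms by (simp add: abs_mult)
    also have "\<dots> \<le> s ^ k / fact k * c ^ k"
      using qpow_bound[OF assms(1,2)] assms by (intro mult_left_mono) (auto simp: c_def)
    also have "\<dots> = b k" by (simp add: b_def power_mult_distrib)
    finally show ?thesis .
  qed
  have sa: "summable (\<lambda>k. \<bar>s ^ k / fact k * qpow B r al k x y\<bar>)"
    using le bs by (intro summable_rabs_comparison_test[of _ b]) (auto simp: sums_iff)
  have "\<bar>bd_trans B r al s x y\<bar> \<le> (\<Sum>k. \<bar>s ^ k / fact k * qpow B r al k x y\<bar>)"
    unfolding bd_trans_def by (rule summable_rabs[OF sa])
  also have "\<dots> \<le> (\<Sum>k. b k)" using le bs sa by (intro suminf_le) (auto simp: sums_iff)
  also have "\<dots> = exp (s * c)" using bs by (simp add: sums_iff)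
  finally show ?thesis by (simp add: c_def)
qed

definition dbound :: "nat \<Rightarrow> real \<Rightarrow> real \<Rightarrow> real \<Rightarrow> real" where
  "dbound B r al dt = r * (dt * exp (dt * (real (Suc B) * (r + al))))"

lemma drops_bound:
  assumes "0 \<le> r" "0 \<le> al" "0 \<le> dt"
  shows "\<bar>drops B r al dt x\<bar> \<le> dbound B r al dt"
proof -
  define E where "E = exp (dt * (real (Suc B) * (r + al)))"
  have "\<bar>integral {0..dt} (\<lambda>s. bd_trans B r al s x B)\<bar> \<le> dt * E"
  proof (cases "(\<lambda>s. bd_trans B r al s x B) integrable_on {0..dt}")
    case True
    have "norm (integral {0..dt} (\<lambda>s. bd_trans B r al s x B)) \<le> E * measure lborel (cbox 0 dt)"
    proof (rule has_integral_bound)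
      show "0 \<le> E" by (simp add: E_def)
      show "((\<lambda>s. bd_trans B r al s x B) has_integral integral {0..dt} (\<lambda>s. bd_trans B r al s x B)) (cbox 0 dt)"
        using True by (simp add: has_integral_integral)
      fix s :: real assume "s \<in> cbox 0 dt"
      then have s: "0 \<le> s" "s \<le> dt" by auto
      have "\<bar>bd_trans B r al s x B\<bar> \<le> exp (s * (real (Suc B) * (r + al)))"
        using bd_trans_bound assms s by auto
      also have "\<dots> \<le> E" unfolding E_def using s assms by (intro exp_mono mult_right_mono) auto
      finally show "norm (bd_trans B r al s x B) \<le> E" by simp
    qed
    then show ?thesis using assms by (simp add: mult.commute measure_lborel_Icc)
  next
    case False then show ?thesis using assms by (simp add: not_integrable_integral E_def)
  qed
  then show ?thesis using assms
    by (simp add: drops_def dbound_def abs_mult E_def mult_left_mono)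
qed

lemma dbound_mono: "0 \<le> r \<Longrightarrow> r \<le> r' \<Longrightarrow> 0 \<le> al \<Longrightarrow> 0 \<le> dt \<Longrightarrow> dbound B r al dt \<le> dbound B r' al dt"
  unfolding dbound_def by (intro mult_mono mult_left_mono exp_mono) auto

lemma dbound_nonneg: "0 \<le> r \<Longrightarrow> 0 \<le> dt \<Longrightarrow> 0 \<le> dbound B r al dt"
  unfolding dbound_def by simp

lemma arr_rate_nonneg: "0 \<le> l \<Longrightarrow> 0 \<le> arr_rate l G a i"
  unfolding arr_rate_def by (intro mult_nonneg_nonneg add_nonneg_nonneg sum_nonneg) auto

lemma arr_rate_le: "0 \<le> l \<Longrightarrow> arr_rate l G a i \<le> l * (1 + real (card (nbrs G i)))"
proof -
  assume l: "0 \<le> l"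
  have t: "of_bool (a j) / real (card (nbrs G j)) \<le> (1::real)" for j
    by (cases "card (nbrs G j) = 0") (auto simp: divide_le_eq)
  have "(\<Sum>j\<in>nbrs G i. of_bool (a j) / real (card (nbrs G j))) \<le> real (card (nbrs G i)) * 1"
    by (rule sum_bounded_above) (use t in auto)
  moreover have "(1 - of_bool (a i)) \<le> (1::real)" by simp
  ultimately show ?thesis unfolding arr_rate_def using l by (intro mult_left_mono) auto
qed

lemma exp_drops_bound:
  fixes lam :: "'s::finite \<Rightarrow> real"
  assumes lf: "\<And>i. i \<in> verts (fst g) \<Longrightarrow> finite (nbrs (fst g) i)" and i: "i \<in> verts (fst g)"
    and al: "0 \<le> al" and dt: "0 \<le> dt" and lam0: "\<And>s. 0 \<le> lam s" and lamL: "\<And>s. lam s \<le> L"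
  shows "\<bar>exp_drops B al dt lam P l0 pol g i t\<bar> \<le> dbound B (L * (1 + real (card (nbrs (fst g) i)))) al dt"
proof -
  let ?C = "dbound B (L * (1 + real (card (nbrs (fst g) i)))) al dt"
  have dl: "\<bar>Dloc B al dt lam pol (fst g) t i x\<bar> \<le> ?C" for x
    unfolding Dloc_def
  proof (rule prob_integral_abs_le[OF prob_space_measure_pmf])
    fix a
    let ?r = "arr_rate (lam (fst x)) (fst g) a i"
    have r0: "0 \<le> ?r" by (rule arr_rate_nonneg[OF lam0])
    have "?r \<le> lam (fst x) * (1 + real (card (nbrs (fst g) i)))" by (rule arr_rate_le[OF lam0])
    also have "\<dots> \<le> L * (1 + real (card (nbrs (fst g) i)))" by (intro mult_right_mono lamL) auto
    finally have rl: "?r \<le> L * (1 + real (card (nbrs (fst g) i)))" .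
    have "\<bar>drops B ?r al dt (snd x i)\<bar> \<le> dbound B ?r al dt" by (rule drops_bound[OF r0 al dt])
    also have "\<dots> \<le> ?C" by (rule dbound_mono[OF r0 rl al dt])
    finally show "\<bar>drops B ?r al dt (snd x i)\<bar> \<le> ?C" .
  qed
  have "exp_drops B al dt lam P l0 pol g i t = measure_pmf.expectation (Mt B al dt lam P l0 pol g t (nb (fst g) {i})) (Dloc B al dt lam pol (fst g) t i)"
    by (rule exp_drops_eq[OF lf i])
  then show ?thesis using prob_integral_abs_le[OF prob_space_measure_pmf dl] by simp
qed


definition ballinv :: "nat \<Rightarrow> nat \<Rightarrow> (rgraph \<Rightarrow> real) \<Rightarrow> bool" where
  "ballinv B k F \<longleftrightarrow> (\<forall>g h. in_Gstar B g \<longrightarrow> in_Gstar B h \<longrightarrow> rg_iso (ball k g) (ball k h) \<longrightarrow> F g = F h)"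

definition canon :: "nat \<Rightarrow> rgraph \<Rightarrow> nat set \<times> (nat \<times> nat) set \<times> (nat \<Rightarrow> nat) \<times> nat" where
  "canon k g = (let G = fst (fst g); W = ballset G k (snd g) in
     (W, {(i, j). adj G i j \<and> i \<in> W \<and> j \<in> W}, restrict (snd (fst g)) W, snd g))"

lemma Gstar_props:
  assumes "in_Gstar B g"
  shows "wf_graph (fst (fst g))" "snd g \<in> verts (fst (fst g))"
    "\<And>i. i \<in> verts (fst (fst g)) \<Longrightarrow> finite (nbrs (fst (fst g)) i)"
  using assms by (auto simp: in_Gstar_def)

lemma canon_iso:
  assumes g: "in_Gstar B g" and h: "in_Gstar B h" and c: "canon k g = canon k h"
  shows "rg_iso (ball k g) (ball k h)"
proof -
  let ?G = "fst (fst g)" and ?H = "fst (fst h)"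
  let ?W = "ballset ?G k (snd g)" and ?W' = "ballset ?H k (snd h)"
  have W: "?W \<subseteq> verts ?G" "?W' \<subseteq> verts ?H"
    using ballset_sub_verts Gstar_props[OF g] Gstar_props[OF h] by auto
  have cc: "?W = ?W' \<and> {(i, j). adj ?G i j \<and> i \<in> ?W \<and> j \<in> ?W} = {(i, j). adj ?H i j \<and> i \<in> ?W' \<and> j \<in> ?W'}
    \<and> restrict (snd (fst g)) ?W = restrict (snd (fst h)) ?W' \<and> snd g = snd h"
    using c unfolding canon_def Let_def prod.inject .
  note eW = cc[THEN conjunct1] and eE = cc[THEN conjunct2, THEN conjunct1]
    and ez = cc[THEN conjunct2, THEN conjunct2, THEN conjunct1] and er = cc[THEN conjunct2, THEN conjunct2, THEN conjunct2]
  have adjq: "adj ?G i j \<and> i \<in> ?W \<and> j \<in> ?W \<longleftrightarrow> adj ?H i j \<and> i \<in> ?W' \<and> j \<in> ?W'" for i j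
    using eE by (auto simp: set_eq_iff)
  have adjq': "adj ?G i j \<longleftrightarrow> adj ?H i j" if "i \<in> ?W" "j \<in> ?W" for i j
    using adjq[of i j] that eW by auto
  have zq: "snd (fst g) i = snd (fst h) i" if "i \<in> ?W" for i
    using ez that eW by (metis restrict_apply')
  show ?thesis
    unfolding rg_iso_def ball_def
    by (rule exI[of _ id]) (use W eW adjq' zq er in \<open>auto simp: bij_betw_def Int_absorb1\<close>)
qed

lemma ballinv_meas:
  assumes inv: "ballinv B k F" and sp: "space M = Gstar B" and st: "sets M = lw_sets B"
  shows "F \<in> borel_measurable M"
proof -
  define D where "D = (\<Union>W\<in>{W::nat set. finite W}. \<Union>E\<in>Pow (W \<times> W). \<Union>zw\<in>PiE W (\<lambda>_. UNIV :: nat set). \<Union>r\<in>(UNIV::nat set). {(W, E, zw, r)})"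
  have cD: "countable D" unfolding D_def
  proof (intro countable_UN[OF countable_Collect_finite])
    fix W :: "nat set" assume W: "W \<in> {W. finite W}"
    show "countable (\<Union>E\<in>Pow (W \<times> W). \<Union>zw\<in>PiE W (\<lambda>_. UNIV :: nat set). \<Union>r\<in>(UNIV::nat set). {(W, E, zw, r)})"
    proof (rule countable_UN[OF countable_finite])
      show "finite (Pow (W \<times> W))" using W by simp
      fix E
      show "countable (\<Union>zw\<in>PiE W (\<lambda>_. UNIV :: nat set). \<Union>r\<in>(UNIV::nat set). {(W, E, zw, r)})"
        by (rule countable_UN[OF countable_PiE]) (use W in auto)
    qed
  qed
  have inD: "canon k g \<in> D" if "in_Gstar B g" for g
  proof -
    have "finite (ballset (fst (fst g)) k (snd g))" using ballset_fin Gstar_props[OF that] by blast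
    then show ?thesis unfolding D_def canon_def Let_def by auto
  qed
  define pick where "pick = (\<lambda>d. SOME g. in_Gstar B g \<and> canon k g = d)"
  define R where "R = pick ` (canon k ` Gstar B)"
  have cR: "countable R" unfolding R_def
    by (intro countable_image countable_subset[OF _ cD]) (auto simp: Gstar_def inD)
  have pick: "in_Gstar B (pick (canon k g)) \<and> canon k (pick (canon k g)) = canon k g" if "in_Gstar B g" for g
    unfolding pick_def by (rule someI[of _ g]) (use that in simp)
  have RG: "H \<in> R \<Longrightarrow> in_Gstar B H" for H unfolding R_def Gstar_def using pick by auto
  show ?thesis
  proof (rule borel_measurableI)
    fix A :: "real set" assume "open A"
    have eq: "F -` A \<inter> space M = (\<Union>H\<in>{H \<in> R. F H \<in> A}. {g \<in> Gstar B. rg_iso (ball k g) (ball k H)})"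
    proof (intro set_eqI iffI)
      fix g assume "g \<in> F -` A \<inter> space M"
      then have g: "in_Gstar B g" "F g \<in> A" using sp by (auto simp: Gstar_def)
      let ?H = "pick (canon k g)"
      have H: "in_Gstar B ?H" "canon k ?H = canon k g" using pick[OF g(1)] by auto
      have iso: "rg_iso (ball k g) (ball k ?H)" by (rule canon_iso[OF g(1) H(1) H(2)[symmetric]])
      have "F ?H = F g" using inv g(1) H(1) iso unfolding ballinv_def by (metis (no_types))
      moreover have "?H \<in> R" using g(1) by (auto simp: R_def Gstar_def)
      ultimately show "g \<in> (\<Union>H\<in>{H \<in> R. F H \<in> A}. {g \<in> Gstar B. rg_iso (ball k g) (ball k H)})"
        using g iso by (intro UN_I[of ?H]) (auto simp: Gstar_def)
    next
      fix g assume "g \<in> (\<Union>H\<in>{H \<in> R. F H \<in> A}. {g \<in> Gstar B. rg_iso (ball k g) (ball k H)})"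
      then obtain H where H: "H \<in> R" "F H \<in> A" "in_Gstar B g" "rg_iso (ball k g) (ball k H)" by (auto simp: Gstar_def)
      have "F g = F H" using inv H RG[OF H(1)] unfolding ballinv_def by blast
      then show "g \<in> F -` A \<inter> space M" using H sp by (auto simp: Gstar_def)
    qed
    have "(\<Union>H\<in>{H \<in> R. F H \<in> A}. {g \<in> Gstar B. rg_iso (ball k g) (ball k H)}) \<in> sets M"
    proof (rule sets.countable_UN'')
      show "countable {H \<in> R. F H \<in> A}" using cR by (rule countable_subset[rotated]) auto
      fix H assume "H \<in> {H \<in> R. F H \<in> A}"
      show "{g \<in> Gstar B. rg_iso (ball k g) (ball k H)} \<in> sets M"
        unfolding st lw_sets_def by (rule sigma_sets.Basic) blast
    qed
    then show "F -` A \<inter> space M \<in> sets M" using eq by simp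
  qed
qed

lemma ballinv_eventually:
  assumes inv: "ballinv B k F" and seq: "\<And>n. in_Gstar B (seq n)" and g: "in_Gstar B g"
    and conv: "lw_converges seq g"
  shows "eventually (\<lambda>n. F (seq n) = F g) sequentially"
proof -
  obtain n' where "\<forall>n>n'. rg_iso (ball k (seq n)) (ball k g)" using conv by (auto simp: lw_converges_def)
  note n' = this
  have "F (seq n) = F g" if "Suc n' \<le> n" for n
  proof -
    have "rg_iso (ball k (seq n)) (ball k g)" using n' that by auto
    then show ?thesis using inv seq[of n] g unfolding ballinv_def by blast
  qed
  then show ?thesis unfolding eventually_sequentially by blast
qed


lemma geo_bound:
  fixes x :: "nat \<Rightarrow> real"
  assumes g: "0 \<le> \<gamma>" "\<gamma> < 1" and b: "\<And>t. \<bar>x t\<bar> \<le> C"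
  shows "summable (\<lambda>t. \<gamma> ^ t * x t)" "\<bar>\<Sum>t. \<gamma> ^ t * x t\<bar> \<le> C / (1 - \<gamma>)"
proof -
  have le: "\<bar>\<gamma> ^ t * x t\<bar> \<le> C * \<gamma> ^ t" for t
    using mult_left_mono[OF b[of t], of "\<gamma> ^ t"] g by (simp add: abs_mult mult.commute)
  have sg: "summable (\<lambda>t. C * \<gamma> ^ t)" using g by (intro summable_mult summable_geometric) simp
  have sa: "summable (\<lambda>t. \<bar>\<gamma> ^ t * x t\<bar>)" by (rule summable_rabs_comparison_test[OF _ sg]) (use le in auto)
  then show "summable (\<lambda>t. \<gamma> ^ t * x t)" by (rule summable_rabs_cancel)
  have "\<bar>\<Sum>t. \<gamma> ^ t * x t\<bar> \<le> (\<Sum>t. \<bar>\<gamma> ^ t * x t\<bar>)" by (rule summable_rabs[OF sa])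
  also have "\<dots> \<le> (\<Sum>t. C * \<gamma> ^ t)" by (rule suminf_le[OF le sa sg])
  also have "\<dots> = C / (1 - \<gamma>)" using g by (simp add: suminf_mult summable_geometric suminf_geometric)
  finally show "\<bar>\<Sum>t. \<gamma> ^ t * x t\<bar> \<le> C / (1 - \<gamma>)" .
qed

lemma nbrs_comp:
  assumes "v \<in> comp_set G i"
  shows "nbrs (induced G (comp_set G i)) v = nbrs G v"
  using assms comp_closed[of v G i] by (auto simp: nbrs_def)

lemma conv_pmf:
  fixes X :: "'a \<Rightarrow> real"
  assumes bnd: "\<And>n g. g \<in> set_pmf (M n) \<Longrightarrow> \<bar>X g\<bar> \<le> K0"
    and cp: "\<And>\<epsilon>. \<epsilon> > 0 \<Longrightarrow> (\<lambda>n. measure_pmf.prob (M n) {g. \<epsilon> < \<bar>X g - c\<bar>}) \<longlonglongrightarrow> 0"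
  shows "(\<lambda>n. measure_pmf.expectation (M n) X) \<longlonglongrightarrow> c"
proof (rule LIMSEQ_I)
  fix r :: real assume r: "0 < r"
  define K where "K = \<bar>K0\<bar> + \<bar>c\<bar>"
  have K0: "0 \<le> K" by (simp add: K_def)
  define \<epsilon> where "\<epsilon> = r / 2"
  have e: "0 < \<epsilon>" using r by (simp add: \<epsilon>_def)
  have "(\<lambda>n. measure_pmf.prob (M n) {g. \<epsilon> < \<bar>X g - c\<bar>}) \<longlonglongrightarrow> 0" by (rule cp[OF e])
  moreover have "0 < r / (2 * (K + 1))" using r K0 by simp
  ultimately obtain no where no: "\<And>n. n \<ge> no \<Longrightarrow> norm (measure_pmf.prob (M n) {g. \<epsilon> < \<bar>X g - c\<bar>} - 0) < r / (2 * (K + 1))"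
    using LIMSEQ_D by blast
  show "\<exists>no. \<forall>n\<ge>no. norm (measure_pmf.expectation (M n) X - c) < r"
  proof (intro exI allI impI)
    fix n assume n: "no \<le> n"
    define E where "E = {g. \<epsilon> < \<bar>X g - c\<bar>}"
    let ?p = "measure_pmf.prob (M n) E"
    have p: "?p < r / (2 * (K + 1))" using no[OF n] by (simp add: E_def)
    have intX: "integrable (measure_pmf (M n)) X"
      by (rule measure_pmf.integrable_const_bound[where B="\<bar>K0\<bar>"]) (auto intro!: AE_pmfI dest: bnd)
    have intXc: "integrable (measure_pmf (M n)) (\<lambda>g. \<bar>X g - c\<bar>)" using intX by auto
    have intB: "integrable (measure_pmf (M n)) (\<lambda>g. \<epsilon> + K * indicator E g)"
      by (rule measure_pmf.integrable_const_bound[where B="\<epsilon> + K"]) (use e K0 in \<open>auto intro!: AE_pmfI simp: indicator_def\<close>)?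
    have "measure_pmf.expectation (M n) X - c = measure_pmf.expectation (M n) (\<lambda>g. X g - c)"
      using intX by (simp add: measure_pmf.prob_space)
    then have "norm (measure_pmf.expectation (M n) X - c) \<le> measure_pmf.expectation (M n) (\<lambda>g. \<bar>X g - c\<bar>)"
      using integral_abs_bound[of "measure_pmf (M n)" "\<lambda>g. X g - c"] by simp
    also have "\<dots> \<le> measure_pmf.expectation (M n) (\<lambda>g. \<epsilon> + K * indicator E g)"
    proof (rule integral_mono_AE[OF intXc intB], rule AE_pmfI)
      fix g assume g: "g \<in> set_pmf (M n)"
      have "\<bar>X g - c\<bar> \<le> K" using bnd[OF g] unfolding K_def by linarith
      then show "\<bar>X g - c\<bar> \<le> \<epsilon> + K * indicator E g"
        using e by (cases "g \<in> E") (auto simp: E_def)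
    qed
    also have "\<dots> = \<epsilon> + K * ?p"
    proof -
      have ii: "integrable (measure_pmf (M n)) (\<lambda>g. K * indicator E g :: real)"
        by (intro integrable_mult_right integrable_real_indicator) (auto simp: measure_pmf.emeasure_eq_measure)
      have "measure_pmf.expectation (M n) (\<lambda>g. \<epsilon> + K * indicator E g) =
          measure_pmf.expectation (M n) (\<lambda>g. \<epsilon>) + measure_pmf.expectation (M n) (\<lambda>g. K * indicator E g)"
        by (rule Bochner_Integration.integral_add[OF _ ii]) simp
      then show ?thesis by (simp add: measure_pmf.prob_space)
    qed
    also have "\<dots> \<le> \<epsilon> + K * (r / (2 * (K + 1)))"
      using p K0 by (intro add_left_mono mult_left_mono) auto
    also have "\<dots> < r"
    proof -
      have "K * (r / (2 * (K + 1))) < r / 2"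
        using K0 r by (simp add: field_simps)
      then show ?thesis unfolding \<epsilon>_def by linarith
    qed
    finally show "norm (measure_pmf.expectation (M n) X - c) < r" .
  qed
qed


theorem theorem2p1:
  fixes d B :: nat and \<alpha> \<Delta>t \<gamma> :: real
    and lam :: "'s::finite \<Rightarrow> real" and P :: "'s \<Rightarrow> 's pmf" and l0 :: "'s pmf"
    and pol :: "nat \<Rightarrow> nat \<Rightarrow> real"
    and Gn :: "nat \<Rightarrow> mgraph pmf" and Glim :: "rgraph measure"
  assumes "\<alpha> > 0" and "\<Delta>t > 0" and "0 < \<gamma>" and "\<gamma> < 1"
    and "\<And>s. lam s > 0"
    and "\<And>t x. x \<le> B \<Longrightarrow> 0 \<le> pol t x \<and> pol t x \<le> 1"
    and "\<And>n g. g \<in> set_pmf (Gn n) \<Longrightarrow>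
           finite (verts (fst g)) \<and> verts (fst g) \<noteq> {} \<and> wf_graph (fst g) \<and>
           max_deg_le d (fst g) \<and> no_isolated (fst g) \<and> marks_ok B g"
    and "prob_space Glim" and "space Glim = Gstar B" and "sets Glim = lw_sets B"
    and "lw_conv_prob B Gn Glim"
  shows "(\<lambda>n. J_fin B \<alpha> \<Delta>t \<gamma> lam P l0 pol (Gn n)) \<longlonglongrightarrow> J_lim B \<alpha> \<Delta>t \<gamma> lam P l0 pol Glim"
proof -
  note al = assms(1) and dtp = assms(2) and g0 = assms(3) and g1 = assms(4) and lampos = assms(5)
    and Gnp = assms(7) and ps = assms(8) and sp = assms(9) and st = assms(10) and conv = assms(11)
  interpret Gl: prob_space Glim by (rule ps)
  define L where "L = Max (range lam)"
  have lamL: "\<And>s. lam s \<le> L" unfolding L_def by (intro Max_ge) auto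
  have lam0: "\<And>s. 0 \<le> lam s" using lampos less_imp_le by blast
  have L0: "0 \<le> L" using lam0[of undefined] lamL[of undefined] by linarith
  define C where "C = dbound B (L * (1 + real d)) \<alpha> \<Delta>t"
  have C0: "0 \<le> C" unfolding C_def by (rule dbound_nonneg) (use L0 dtp in auto)
  define deg where "deg = (\<lambda>g::rgraph. card (nbrs (fst (fst g)) (snd g)))"
  define EDr where "EDr = (\<lambda>t (g::rgraph). exp_drops B \<alpha> \<Delta>t lam P l0 pol (fst g) (snd g) t)"
  define Fd where "Fd = (\<lambda>t g. if deg g \<le> d then EDr t g else 0)"
  define f where "f = (\<lambda>g. \<Sum>t. \<gamma> ^ t * Fd t g)"
  have gs: "wf_graph (fst (fst g))" "snd g \<in> verts (fst (fst g))"
     "\<And>i. i \<in> verts (fst (fst g)) \<Longrightarrow> finite (nbrs (fst (fst g)) i)" if "in_Gstar B g" for g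
    using Gstar_props[OF that] by auto

  have EDrinv: "ballinv B (Suc (Suc t)) (EDr t)" for t
    unfolding ballinv_def
  proof (intro allI impI)
    fix g h assume g: "in_Gstar B g" and h: "in_Gstar B h" and iso: "rg_iso (ball (Suc (Suc t)) g) (ball (Suc (Suc t)) h)"
    obtain G z r where gg: "g = ((G, z), r)" by (metis prod.collapse)
    obtain G' z' r' where hh: "h = ((G', z'), r')" by (metis prod.collapse)
    have "exp_drops B \<alpha> \<Delta>t lam P l0 pol (G', z') r' t = exp_drops B \<alpha> \<Delta>t lam P l0 pol (G, z) r t"
      by (rule F_inv[where k="Suc t"]) (use gs[OF g] gs[OF h] iso in \<open>auto simp: gg hh\<close>)
    then show "EDr t g = EDr t h" by (simp add: EDr_def gg hh)
  qed
  have deginv: "deg g = deg h" if g: "in_Gstar B g" and h: "in_Gstar B h" and iso: "rg_iso (ball (Suc k) g) (ball (Suc k) h)" for g h k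
  proof -
    obtain G z r where gg: "g = ((G, z), r)" by (metis prod.collapse)
    obtain G' z' r' where hh: "h = ((G', z'), r')" by (metis prod.collapse)
    have "card (nbrs G' r') = card (nbrs G r)"
      by (rule deg_inv[where k=k]) (use gs[OF g] gs[OF h] iso in \<open>auto simp: gg hh\<close>)
    then show ?thesis by (simp add: deg_def gg hh)
  qed
  have Fdinv: "ballinv B (Suc (Suc t)) (Fd t)" for t
    unfolding ballinv_def
  proof (intro allI impI)
    fix g h assume g: "in_Gstar B g" and h: "in_Gstar B h" and iso: "rg_iso (ball (Suc (Suc t)) g) (ball (Suc (Suc t)) h)"
    have "deg g = deg h" by (rule deginv[OF g h iso])
    moreover have "EDr t g = EDr t h" using EDrinv[of t] g h iso unfolding ballinv_def by blast
    ultimately show "Fd t g = Fd t h" by (simp add: Fd_def)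
  qed
  have EDrb: "\<bar>EDr t g\<bar> \<le> C" if "in_Gstar B g" "deg g \<le> d" for t g
  proof -
    have "\<bar>EDr t g\<bar> \<le> dbound B (L * (1 + real (deg g))) \<alpha> \<Delta>t"
      unfolding EDr_def deg_def by (rule exp_drops_bound) (use gs[OF that(1)] al dtp lam0 lamL in auto)
    also have "\<dots> \<le> C" unfolding C_def by (rule dbound_mono) (use L0 that(2) al dtp in \<open>auto intro!: mult_left_mono\<close>)
    finally show ?thesis .
  qed
  have Fdb: "\<bar>Fd t g\<bar> \<le> C" if "in_Gstar B g" for t g using EDrb[OF that] C0 by (auto simp: Fd_def)
  have fb: "\<bar>f g\<bar> \<le> C / (1 - \<gamma>)" if "in_Gstar B g" for g
    unfolding f_def by (rule geo_bound(2)) (use g0 g1 Fdb[OF that] in auto)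
  have Fdm: "Fd t \<in> borel_measurable Glim" for t by (rule ballinv_meas[OF Fdinv sp st])
  have fm: "f \<in> borel_measurable Glim"
    unfolding f_def by (intro borel_measurable_suminf borel_measurable_times borel_measurable_const Fdm)
  have fc: "lw_bcont B f"
    unfolding lw_bcont_def
  proof (intro conjI allI impI)
    show "\<exists>C. \<forall>g. in_Gstar B g \<longrightarrow> \<bar>f g\<bar> \<le> C" using fb by blast
    fix seq g assume seq: "\<forall>n. in_Gstar B (seq n)" and g: "in_Gstar B g" and cv: "lw_converges seq g"
    have lim: "(\<lambda>n. \<gamma> ^ t * Fd t (seq n)) \<longlonglongrightarrow> \<gamma> ^ t * Fd t g" for t
    proof -
      have "eventually (\<lambda>n. Fd t (seq n) = Fd t g) sequentially"
        by (rule ballinv_eventually[OF Fdinv]) (use seq g cv in auto)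
      then have "(\<lambda>n. Fd t (seq n)) \<longlonglongrightarrow> Fd t g" by (rule tendsto_eventually)
      then show ?thesis by (rule tendsto_mult_left)
    qed
    have bnd: "eventually (\<lambda>(k, n). norm (\<gamma> ^ k * Fd k (seq n)) \<le> C * \<gamma> ^ k) (at_top \<times>\<^sub>F sequentially)"
    proof (rule always_eventually, clarify)
      fix k n
      have "\<bar>Fd k (seq n)\<bar> \<le> C" using Fdb seq by blast
      then show "norm (\<gamma> ^ k * Fd k (seq n)) \<le> C * \<gamma> ^ k"
        using mult_left_mono[of "\<bar>Fd k (seq n)\<bar>" C "\<gamma> ^ k"] g0 by (simp add: abs_mult mult.commute)
    qed
    have sm: "summable (\<lambda>k. C * \<gamma> ^ k)" using g0 g1 by (intro summable_mult summable_geometric) simp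
    have "((\<lambda>n. \<Sum>k. \<gamma> ^ k * Fd k (seq n)) \<longlongrightarrow> (\<Sum>k. \<gamma> ^ k * Fd k g)) sequentially"
      using tannerys_theorem[OF lim bnd sm trivial_limit_sequentially] by blast
    then show "(\<lambda>n. f (seq n)) \<longlonglongrightarrow> f g" unfolding f_def .
  qed
  have gp: "finite (verts (fst g))" "verts (fst g) \<noteq> {}" "wf_graph (fst g)" "max_deg_le d (fst g)"
    if "g \<in> set_pmf (Gn n)" for g n using Gnp[OF that] by auto
  have lfg: "\<And>i. i \<in> verts (fst g) \<Longrightarrow> finite (nbrs (fst g) i)" "\<And>i. i \<in> verts (fst g) \<Longrightarrow> card (nbrs (fst g) i) \<le> d"
    if "g \<in> set_pmf (Gn n)" for g n using gp(4)[OF that] by (auto simp: max_deg_le_def)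
  have EDb: "\<bar>exp_drops B \<alpha> \<Delta>t lam P l0 pol g i t\<bar> \<le> C" if g: "g \<in> set_pmf (Gn n)" and i: "i \<in> verts (fst g)" for g n i t
  proof -
    have "\<bar>exp_drops B \<alpha> \<Delta>t lam P l0 pol g i t\<bar> \<le> dbound B (L * (1 + real (card (nbrs (fst g) i)))) \<alpha> \<Delta>t"
      by (rule exp_drops_bound) (use lfg[OF g] i al dtp lam0 lamL in auto)
    also have "\<dots> \<le> C" unfolding C_def by (rule dbound_mono) (use L0 lfg(2)[OF g i] al dtp in \<open>auto intro!: mult_left_mono\<close>)
    finally show ?thesis .
  qed
  have degc: "deg (component g i) \<le> d" if g: "g \<in> set_pmf (Gn n)" and i: "i \<in> verts (fst g)" for g n i
    using nbrs_comp[OF root_comp, of "fst g" i] lfg(2)[OF g i] by (simp add: deg_def component_def)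
  have compFd: "Fd t (component g i) = exp_drops B \<alpha> \<Delta>t lam P l0 pol g i t"
    if g: "g \<in> set_pmf (Gn n)" and i: "i \<in> verts (fst g)" for g n i t
  proof -
    have "exp_drops B \<alpha> \<Delta>t lam P l0 pol (fst g, snd g) i t =
          exp_drops B \<alpha> \<Delta>t lam P l0 pol (induced (fst g) (comp_set (fst g) i), snd g) i t"
      by (rule comp_exp) (use gp(3)[OF g] lfg(1)[OF g] i in auto)
    then show ?thesis using degc[OF g i] by (simp add: Fd_def EDr_def component_def)
  qed
  have fcomp: "f (component g i) = (\<Sum>t. \<gamma> ^ t * exp_drops B \<alpha> \<Delta>t lam P l0 pol g i t)"
    if g: "g \<in> set_pmf (Gn n)" and i: "i \<in> verts (fst g)" for g n i
    unfolding f_def using compFd[OF g i] by simp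
  have sED: "summable (\<lambda>t. \<gamma> ^ t * exp_drops B \<alpha> \<Delta>t lam P l0 pol g i t)"
    and bED: "\<bar>\<Sum>t. \<gamma> ^ t * exp_drops B \<alpha> \<Delta>t lam P l0 pol g i t\<bar> \<le> C / (1 - \<gamma>)"
    if g: "g \<in> set_pmf (Gn n)" and i: "i \<in> verts (fst g)" for g n i
    using geo_bound[of \<gamma> "\<lambda>t. exp_drops B \<alpha> \<Delta>t lam P l0 pol g i t" C] g0 g1 EDb[OF g i] by auto
  have integrand: "(\<Sum>t. \<gamma> ^ t * ((\<Sum>i\<in>verts (fst g). exp_drops B \<alpha> \<Delta>t lam P l0 pol g i t) / real (card (verts (fst g)))))
      = lw_avg f g" if g: "g \<in> set_pmf (Gn n)" for g n
  proof -
    let ?V = "verts (fst g)" and ?N = "real (card (verts (fst g)))"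
    let ?E = "\<lambda>i t. \<gamma> ^ t * exp_drops B \<alpha> \<Delta>t lam P l0 pol g i t"
    have "(\<Sum>t. \<gamma> ^ t * ((\<Sum>i\<in>?V. exp_drops B \<alpha> \<Delta>t lam P l0 pol g i t) / ?N)) = (\<Sum>t. (\<Sum>i\<in>?V. ?E i t) / ?N)"
      by (simp add: sum_distrib_left)
    also have "\<dots> = (\<Sum>t. \<Sum>i\<in>?V. ?E i t) / ?N"
      by (rule suminf_divide, rule summable_sum) (use sED[OF g] in auto)
    also have "(\<Sum>t. \<Sum>i\<in>?V. ?E i t) = (\<Sum>i\<in>?V. \<Sum>t. ?E i t)"
      by (rule suminf_sum) (use sED[OF g] in auto)
    also have "\<dots> = (\<Sum>i\<in>?V. f (component g i))"
      using fcomp[OF g] by simp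
    finally show ?thesis by (simp add: lw_avg_def)
  qed
  have avgb: "\<bar>lw_avg f g\<bar> \<le> C / (1 - \<gamma>)" if g: "g \<in> set_pmf (Gn n)" for g n
  proof -
    let ?V = "verts (fst g)"
    have N: "0 < card ?V" using gp(1,2)[OF g] by (simp add: card_gt_0_iff)
    have "\<bar>\<Sum>i\<in>?V. f (component g i)\<bar> \<le> (\<Sum>i\<in>?V. \<bar>f (component g i)\<bar>)" by (rule sum_abs)
    also have "\<dots> \<le> real (card ?V) * (C / (1 - \<gamma>))"
      by (rule sum_bounded_above) (use fcomp[OF g] bED[OF g] in auto)
    finally show ?thesis using N by (simp add: lw_avg_def divide_le_eq mult.commute)
  qed
  define hd where "hd = (\<lambda>g. if deg g \<le> d then 0 else (1::real))"
  have hinv: "ballinv B (Suc 0) hd"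
    unfolding ballinv_def
  proof (intro allI impI)
    fix g h assume g: "in_Gstar B g" and h: "in_Gstar B h" and iso: "rg_iso (ball (Suc 0) g) (ball (Suc 0) h)"
    show "hd g = hd h" using deginv[OF g h iso] by (simp add: hd_def)
  qed
  have hm: "hd \<in> borel_measurable Glim" by (rule ballinv_meas[OF hinv sp st])
  have hc: "lw_bcont B hd"
    unfolding lw_bcont_def
  proof (intro conjI allI impI)
    show "\<exists>C. \<forall>g. in_Gstar B g \<longrightarrow> \<bar>hd g\<bar> \<le> C" by (rule exI[of _ 1]) (simp add: hd_def)
    fix seq g assume seq: "\<forall>n. in_Gstar B (seq n)" and g: "in_Gstar B g" and cv: "lw_converges seq g"
    have "eventually (\<lambda>n. hd (seq n) = hd g) sequentially"
      by (rule ballinv_eventually[OF hinv]) (use seq g cv in auto)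
    then show "(\<lambda>n. hd (seq n)) \<longlonglongrightarrow> hd g" by (rule tendsto_eventually)
  qed
  have havg: "lw_avg hd g = 0" if g: "g \<in> set_pmf (Gn n)" for g n
    unfolding lw_avg_def using degc[OF g] by (simp add: hd_def)
  have hint: "integrable Glim hd"
    by (rule Gl.integrable_const_bound[where B=1, OF _ hm]) (auto simp: hd_def)
  have hI: "integral\<^sup>L Glim hd = 0"
  proof (rule ccontr)
    assume ne: "integral\<^sup>L Glim hd \<noteq> 0"
    have "0 \<le> integral\<^sup>L Glim hd" by (rule integral_nonneg_AE) (auto simp: hd_def)
    with ne have pos: "0 < integral\<^sup>L Glim hd" by simp
    define \<epsilon> where "\<epsilon> = integral\<^sup>L Glim hd / 2"
    have e: "0 < \<epsilon>" using pos by (simp add: \<epsilon>_def)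
    have l0: "(\<lambda>n. measure_pmf.prob (Gn n) {g. \<epsilon> < \<bar>lw_avg hd g - integral\<^sup>L Glim hd\<bar>}) \<longlonglongrightarrow> 0"
      using conv hc e unfolding lw_conv_prob_def by blast
    have one: "measure_pmf.prob (Gn n) {g. \<epsilon> < \<bar>lw_avg hd g - integral\<^sup>L Glim hd\<bar>} = 1" for n
    proof -
      have "AE g in measure_pmf (Gn n). g \<in> {g. \<epsilon> < \<bar>lw_avg hd g - integral\<^sup>L Glim hd\<bar>}"
        using havg pos by (intro AE_pmfI) (auto simp: \<epsilon>_def)
      then show ?thesis by (subst measure_pmf.prob_eq_1) auto
    qed
    have "(\<lambda>n. measure_pmf.prob (Gn n) {g. \<epsilon> < \<bar>lw_avg hd g - integral\<^sup>L Glim hd\<bar>}) \<longlonglongrightarrow> 1"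
      unfolding one by simp
    with l0 show False using LIMSEQ_unique by fastforce
  qed
  have hAE: "AE g in Glim. deg g \<le> d"
  proof -
    have "AE g in Glim. hd g = 0"
      using integral_nonneg_eq_0_iff_AE[OF hint] hI by (auto simp: hd_def)
    then show ?thesis by eventually_elim (auto simp: hd_def split: if_splits)
  qed
  have EDrm: "(\<lambda>g. \<Sum>t. \<gamma> ^ t * EDr t g) \<in> borel_measurable Glim"
    by (intro borel_measurable_suminf borel_measurable_times borel_measurable_const ballinv_meas[OF EDrinv sp st])
  have Jlim: "J_lim B \<alpha> \<Delta>t \<gamma> lam P l0 pol Glim = - integral\<^sup>L Glim f"
  proof -
    have "integral\<^sup>L Glim (\<lambda>g. \<Sum>t. \<gamma> ^ t * EDr t g) = integral\<^sup>L Glim f"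
      by (rule integral_cong_AE[OF EDrm fm]) (use hAE in \<open>eventually_elim, simp add: f_def Fd_def\<close>)
    then show ?thesis by (simp add: J_lim_def EDr_def)
  qed
  have Jfin: "J_fin B \<alpha> \<Delta>t \<gamma> lam P l0 pol (Gn n) = - measure_pmf.expectation (Gn n) (lw_avg f)" for n
  proof -
    have "measure_pmf.expectation (Gn n) (\<lambda>g. \<Sum>t. \<gamma> ^ t * ((\<Sum>i\<in>verts (fst g). exp_drops B \<alpha> \<Delta>t lam P l0 pol g i t) / real (card (verts (fst g)))))
       = measure_pmf.expectation (Gn n) (lw_avg f)"
      by (rule integral_cong_AE, simp, simp, rule AE_pmfI, erule integrand)
    then show ?thesis by (simp add: J_fin_def)
  qed
  have "(\<lambda>n. measure_pmf.expectation (Gn n) (lw_avg f)) \<longlonglongrightarrow> integral\<^sup>L Glim f"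
  proof (rule conv_pmf[of Gn "lw_avg f" "C / (1 - \<gamma>)"])
    show "\<And>n g. g \<in> set_pmf (Gn n) \<Longrightarrow> \<bar>lw_avg f g\<bar> \<le> C / (1 - \<gamma>)" by (rule avgb)
    show "\<And>\<epsilon>. 0 < \<epsilon> \<Longrightarrow> (\<lambda>n. measure_pmf.prob (Gn n) {g. \<epsilon> < \<bar>lw_avg f g - integral\<^sup>L Glim f\<bar>}) \<longlonglongrightarrow> 0"
      using conv fc unfolding lw_conv_prob_def by blast
  qed
  then show ?thesis unfolding Jfin Jlim by (rule tendsto_minus)
qed


end
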